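(* Let $T_p>0$ and let $f:[0,\infty)\times\mathbb{R}^n\times\mathbb{R}^m\to\mathbb{R}^n$ satisfy: (A1) $f$ is locally Lipschitz continuous in $x$ and $u$, piecewise continuous in $t$, and $f(t+T_p,x,u)=f(t,x,u)$ for all $(t,x,u)$; (A2) $f(t,0,0)=0$ for all $t\ge 0$; (A3) $B\subset\mathbb{R}^n$ is an open ball about the origin and $V:B\to\mathbb{R}$ is positive definite and locally Lipschitz continuous, with constants $0<\alpha_1\le\alpha_2$ such that $\alpha_1 x^\top x\le V(x)\le \alpha_2 x^\top x$ for all $x\in B$; (A4) there is a constant $0\le c<1$ such that for each $\xi\in B$ there exist a continuous input $u_\xi:[0,T_p]\to\mathbb{R}^m$ and a corresponding solution $\varphi_\xi:[0,T_p]\to\mathbb{R}^n$ of $\dot x=f(t,x,u)$, i.e. $\varphi_\xi(t)=\xi+\int_0^t f(\tau,\varphi_\xi(\tau),u_\xi(\tau))\,d\tau$, satisfying $\varphi_\xi(T_p)\in B$ and $V(\varphi_\xi(T_p))\le c\,V(\xi)$; moreover $u_0(t)\equiv 0$. Assume in addition that there exist an open set $B^e\supset B$ and a function $\mu:[0,\infty)\times B^e\to\mathbb{R}^m$ that is piecewise continuous in $t$, $T_p$-periodic in $t$, locally Lipschitz continuous in $x$, and such that $\mu(t,\varphi_\xi(t))=u_\xi(t)$ for all $0\le t<T_p$ and all $\xi\in B$. Then the origin of the closed-loop system $\dot x=f(t,x,\mu(t,x))$ is locally exponentially stable, uniformly in $t$, and the trajectories $\varphi_\xi$, $\xi\in B$,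 from (A4) are solutions of this closed-loop system. *)

theory Defs
  imports "HOL-Analysis.Analysis"
begin

definition pw_continuous_nonneg :: "(real \<Rightarrow> 'c::topological_space) \<Rightarrow> bool" where
  "pw_continuous_nonneg g \<longleftrightarrow>
     (\<forall>T\<ge>0. \<exists>S. finite S \<and> continuous_on ({0..T} - S) g \<and>
        (\<forall>s\<in>S. (0 < s \<longrightarrow> (\<exists>l. (g \<longlongrightarrow> l) (at_left s))) \<and> (\<exists>l. (g \<longlongrightarrow> l) (at_right s))))"

definition loc_lipschitz_in_x :: "'a::metric_space set \<Rightarrow> (real \<Rightarrow> 'a \<Rightarrow> 'c::real_normed_vector) \<Rightarrow> bool" where
  "loc_lipschitz_in_x D g \<longleftrightarrow>
     (\<forall>T\<ge>0. \<forall>x0\<in>D. \<exists>r>0. \<exists>L. \<forall>t\<in>{0..T}. \<forall>x\<in>ball x0 r \<inter> D. \<forall>y\<in>ball x0 r \<inter> D.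
         norm (g t x - g t y) \<le> L * dist x y)"

definition loc_lipschitz_on :: "'a::metric_space set \<Rightarrow> ('a \<Rightarrow> real) \<Rightarrow> bool" where
  "loc_lipschitz_on D V \<longleftrightarrow>
     (\<forall>x0\<in>D. \<exists>r>0. \<exists>L. \<forall>x\<in>ball x0 r \<inter> D. \<forall>y\<in>ball x0 r \<inter> D. \<bar>V x - V y\<bar> \<le> L * dist x y)"

definition cl_solution ::
  "(real \<Rightarrow> 'a::euclidean_space \<Rightarrow> 'b::euclidean_space \<Rightarrow> 'a) \<Rightarrow> (real \<Rightarrow> 'a \<Rightarrow> 'b) \<Rightarrow> 'a set
    \<Rightarrow> (real \<Rightarrow> 'a) \<Rightarrow> real \<Rightarrow> real \<Rightarrow> bool" where
  "cl_solution f \<mu> Be x t0 t1 \<longleftrightarrow>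
     (\<forall>t\<in>{t0..t1}. x t \<in> Be) \<and>
     (\<forall>t\<in>{t0..t1}. ((\<lambda>\<tau>. f \<tau> (x \<tau>) (\<mu> \<tau> (x \<tau>))) has_integral (x t - x t0)) {t0..t})"

definition cl_loc_exp_stable ::
  "(real \<Rightarrow> 'a::euclidean_space \<Rightarrow> 'b::euclidean_space \<Rightarrow> 'a) \<Rightarrow> (real \<Rightarrow> 'a \<Rightarrow> 'b) \<Rightarrow> 'a set \<Rightarrow> bool" where
  "cl_loc_exp_stable f \<mu> Be \<longleftrightarrow>
     (\<exists>\<delta>>0. \<exists>k>0. \<exists>lam>0. \<forall>t0\<ge>0.
        (\<forall>x0. norm x0 < \<delta> \<longrightarrow> (\<exists>x. x t0 = x0 \<and> (\<forall>t1\<ge>t0. cl_solution f \<mu> Be x t0 t1))) \<and>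
        (\<forall>x t1. cl_solution f \<mu> Be x t0 t1 \<and> norm (x t0) < \<delta> \<longrightarrow>
            (\<forall>t\<in>{t0..t1}. norm (x t) \<le> k * norm (x t0) * exp (- lam * (t - t0)))))"

end

theory Submission
  imports Defs
begin

lemma gronwall:
  fixes g :: "real \<Rightarrow> real"
  assumes ab: "a \<le> b" and gc: "continuous_on {a..b} g" and L: "0 \<le> L"
    and le: "\<And>t. t \<in> {a..b} \<Longrightarrow> g t \<le> C + L * integral {a..t} g"
    and t: "t \<in> {a..b}"
  shows "g t \<le> C * exp (L * (t - a))"
proof -
  define h where "h = (\<lambda>s. C + L * integral {a..s} g)"
  define k where "k = (\<lambda>s. exp (- L * (s - a)) * h s)"
  have hc: "continuous_on {a..b} h"
    unfolding h_def
    by (intro continuous_intros indefinite_integral_continuous_1 integrable_continuous_real gc)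
  have kc: "continuous_on {a..t} k"
  proof -
    have "continuous_on {a..t} h" using hc t by (elim continuous_on_subset) auto
    then show ?thesis unfolding k_def by (intro continuous_intros)
  qed
  have "k t \<le> k a"
  proof (rule DERIV_nonpos_imp_decreasing_open[of a t k])
    show "a \<le> t" using t by auto
    fix s assume s: "a < s" "s < t"
    have dh: "(h has_real_derivative (L * g s)) (at s)"
    proof -
      have "((\<lambda>x. integral {a..x} g) has_real_derivative g s) (at s within {a..b})"
        using s t by (intro integral_has_real_derivative gc) auto
      moreover have "at s within {a..b} = at s" using s t by (intro at_within_Icc_at) auto
      ultimately have "((\<lambda>x. integral {a..x} g) has_real_derivative g s) (at s)" by simp
      then show ?thesis unfolding h_def by (auto intro!: derivative_eq_intros)
    qed
    have dk: "(k has_real_derivative (exp (- L * (s - a)) * (L * g s) + (- L) * exp (- L * (s - a)) * h s)) (at s)"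
      unfolding k_def using dh by (auto intro!: derivative_eq_intros)
    have "g s \<le> h s" unfolding h_def using le s t by auto
    then have "exp (- L * (s - a)) * (L * g s) + (- L) * exp (- L * (s - a)) * h s
          = L * exp (- L * (s - a)) * (g s - h s)" by (simp add: algebra_simps)
    also have "\<dots> \<le> 0" using \<open>g s \<le> h s\<close> L by (simp add: mult_nonneg_nonpos)
    finally show "\<exists>y. (k has_real_derivative y) (at s) \<and> y \<le> 0" using dk by blast
  qed (fact kc)
  then have "k t \<le> C" by (simp add: k_def h_def)
  then have "exp (L * (t - a)) * k t \<le> exp (L * (t - a)) * C" by (intro mult_left_mono) auto
  moreover have "exp (L * (t - a)) * k t = h t"
  proof -
    have "exp (L * (t - a)) * exp (- (L * (t - a))) = 1" by (rule exp_minus_inverse)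
    then show ?thesis by (simp add: k_def)
  qed
  ultimately show ?thesis using le[OF t] unfolding h_def by (simp only: mult.commute)
qed

lemma exp_integral:
  fixes K a t :: real
  assumes "a \<le> t"
  shows "((\<lambda>\<tau>. K * exp (K * (\<tau> - a))) has_integral (exp (K * (t - a)) - 1)) {a..t}"
proof -
  have "((\<lambda>\<tau>. K * exp (K * (\<tau> - a))) has_integral (exp (K * (t - a)) - exp (K * (a - a)))) {a..t}"
    by (rule fundamental_theorem_of_calculus[OF assms])
       (auto intro!: derivative_eq_intros simp: has_real_derivative_iff_has_vector_derivative[symmetric])
  then show ?thesis by simp
qed

definition isol :: "(real \<Rightarrow> 'a::euclidean_space \<Rightarrow> 'a) \<Rightarrow> (real \<Rightarrow> 'a) \<Rightarrow> real \<Rightarrow> real \<Rightarrow> bool" where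
  "isol G z a b \<longleftrightarrow> (\<forall>t\<in>{a..b}. ((\<lambda>\<tau>. G \<tau> (z \<tau>)) has_integral (z t - z a)) {a..t})"

lemma isol_int:
  assumes "isol G z a b" "a \<le> b"
  shows "(\<lambda>\<tau>. G \<tau> (z \<tau>)) integrable_on {a..b}"
    and "\<And>t. t \<in> {a..b} \<Longrightarrow> z t = z a + integral {a..t} (\<lambda>\<tau>. G \<tau> (z \<tau>))"
proof -
  show "(\<lambda>\<tau>. G \<tau> (z \<tau>)) integrable_on {a..b}"
    using assms unfolding isol_def by (meson atLeastAtMost_iff has_integral_integrable order_refl)
  fix t assume "t \<in> {a..b}"
  then have "((\<lambda>\<tau>. G \<tau> (z \<tau>)) has_integral (z t - z a)) {a..t}"
    using assms unfolding isol_def by blast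
  then show "z t = z a + integral {a..t} (\<lambda>\<tau>. G \<tau> (z \<tau>))"
    by (simp add: integral_unique)
qed

lemma isol_cont:
  assumes "isol G z a b" "a \<le> b"
  shows "continuous_on {a..b} z"
proof -
  have "continuous_on {a..b} (\<lambda>t. integral {a..t} (\<lambda>\<tau>. G \<tau> (z \<tau>)))"
    by (rule indefinite_integral_continuous_1[OF isol_int(1)[OF assms]])
  then have "continuous_on {a..b} (\<lambda>t. z a + integral {a..t} (\<lambda>\<tau>. G \<tau> (z \<tau>)))"
    by (rule continuous_on_add[OF continuous_on_const])
  then show ?thesis
  proof (rule continuous_on_eq)
    fix t assume t: "t \<in> {a..b}"
    show "z a + integral {a..t} (\<lambda>\<tau>. G \<tau> (z \<tau>)) = z t"
      using isol_int(2)[OF assms t] by simp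
  qed
qed

lemma isol_gron:
  assumes ab: "a \<le> s" and L: "0 \<le> L"
    and lip: "\<And>\<tau> x y. \<tau> \<in> {a..s} \<Longrightarrow> x \<in> cball 0 r \<Longrightarrow> y \<in> cball 0 r \<Longrightarrow> norm (G \<tau> x - G \<tau> y) \<le> L * norm (x - y)"
    and G0: "\<And>\<tau>. \<tau> \<in> {a..s} \<Longrightarrow> G \<tau> 0 = 0"
    and sol: "isol G z a s"
    and inb: "\<And>\<tau>. \<tau> \<in> {a..s} \<Longrightarrow> z \<tau> \<in> cball 0 r"
  shows "norm (z s) \<le> norm (z a) * exp (L * (s - a))"
proof (rule gronwall[where g = "\<lambda>t. norm (z t)" and b = s])
  show "continuous_on {a..s} (\<lambda>t. norm (z t))"
    by (intro continuous_intros isol_cont[OF sol ab])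
  fix t assume t: "t \<in> {a..s}"
  have zt: "z t = z a + integral {a..t} (\<lambda>\<tau>. G \<tau> (z \<tau>))" using isol_int(2)[OF sol ab t] .
  have i1: "(\<lambda>\<tau>. G \<tau> (z \<tau>)) integrable_on {a..t}"
    by (rule integrable_on_subinterval[OF isol_int(1)[OF sol ab]]) (use t in auto)
  have zc: "continuous_on {a..t} z"
    using isol_cont[OF sol ab] t by (elim continuous_on_subset) auto
  have i2: "(\<lambda>\<tau>. L * norm (z \<tau>)) integrable_on {a..t}"
    by (intro integrable_continuous_real continuous_intros zc)
  have "norm (integral {a..t} (\<lambda>\<tau>. G \<tau> (z \<tau>))) \<le> integral {a..t} (\<lambda>\<tau>. L * norm (z \<tau>))"
  proof (rule integral_norm_bound_integral[OF i1 i2])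
    fix \<tau> assume \<tau>: "\<tau> \<in> {a..t}"
    then have "\<tau> \<in> {a..s}" using t by auto
    have "0 \<in> cball 0 r" using inb[OF \<open>\<tau> \<in> {a..s}\<close>] by (auto intro: order_trans[OF norm_ge_zero])
    then have "norm (G \<tau> (z \<tau>) - G \<tau> 0) \<le> L * norm (z \<tau> - 0)"
      using \<open>\<tau> \<in> {a..s}\<close> by (intro lip inb)
    then show "norm (G \<tau> (z \<tau>)) \<le> L * norm (z \<tau>)" using G0[OF \<open>\<tau> \<in> {a..s}\<close>] by simp
  qed
  also have "\<dots> = L * integral {a..t} (\<lambda>\<tau>. norm (z \<tau>))" by (simp add: integral_mult_right)
  finally show "norm (z t) \<le> norm (z a) + L * integral {a..t} (\<lambda>\<tau>. norm (z \<tau>))"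
    using zt norm_triangle_ineq[of "z a" "integral {a..t} (\<lambda>\<tau>. G \<tau> (z \<tau>))"] by simp
qed (use ab L in auto)

lemma isol_bound:
  assumes ab: "a \<le> b" and L: "0 \<le> L"
    and lip: "\<And>\<tau> x y. \<tau> \<in> {a..b} \<Longrightarrow> x \<in> cball 0 r \<Longrightarrow> y \<in> cball 0 r \<Longrightarrow> norm (G \<tau> x - G \<tau> y) \<le> L * norm (x - y)"
    and G0: "\<And>\<tau>. \<tau> \<in> {a..b} \<Longrightarrow> G \<tau> 0 = 0"
    and sol: "isol G z a b"
    and small: "norm (z a) * exp (L * (b - a)) < r"
    and t: "t \<in> {a..b}"
  shows "norm (z t) \<le> norm (z a) * exp (L * (t - a))"
proof -
  define \<rho> where "\<rho> = (norm (z a) * exp (L * (b - a)) + r) / 2"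
  have \<rho>: "norm (z a) * exp (L * (b - a)) < \<rho>" "\<rho> < r" using small by (auto simp: \<rho>_def)
  have za: "norm (z a) \<le> norm (z a) * exp (L * (b - a))"
    using ab L by (simp add: mult_le_cancel_left1)
  have zc: "continuous_on {a..b} z" using isol_cont[OF sol ab] .
  have sub: "isol G z a s" if "s \<in> {a..b}" for s
    using sol that unfolding isol_def by auto
  have gs: "norm (z s) \<le> norm (z a) * exp (L * (s - a))"
    if s: "s \<in> {a..b}" and inb: "\<And>\<tau>. \<tau> \<in> {a..s} \<Longrightarrow> z \<tau> \<in> cball 0 r" for s
    by (rule isol_gron[OF _ L _ _ sub[OF s] inb]) (use s lip G0 in auto)
  define A where "A = {s \<in> {a..b}. \<rho> \<le> norm (z s)}"
  have Aclosed: "closed A" unfolding A_def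
    by (intro continuous_on_closed_Collect_le continuous_intros zc)
  have "A = {}"
  proof (rule ccontr)
    assume "A \<noteq> {}"
    define s0 where "s0 = Inf A"
    have bdd: "bdd_below A" unfolding A_def by (auto intro: bdd_belowI[where m = a])
    have s0A: "s0 \<in> A" unfolding s0_def by (rule closed_contains_Inf[OF \<open>A \<noteq> {}\<close> bdd Aclosed])
    have lt: "norm (z \<tau>) < \<rho>" if "\<tau> \<in> {a..b}" "\<tau> < s0" for \<tau>
    proof (rule ccontr)
      assume "\<not> ?thesis"
      then have "\<tau> \<in> A" using that by (auto simp: A_def)
      then have "s0 \<le> \<tau>" unfolding s0_def by (rule cInf_lower[OF _ bdd])
      then show False using that by auto
    qed
    have as0: "a < s0"
    proof (rule ccontr)
      assume "\<not> a < s0"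
      then have "s0 = a" using s0A by (auto simp: A_def)
      then show False using s0A \<rho> za by (auto simp: A_def)
    qed
    have C: "closed {\<tau> \<in> {a..b}. norm (z \<tau>) \<le> \<rho>}"
      by (intro continuous_on_closed_Collect_le continuous_intros zc)
    have "{a..<s0} \<subseteq> {\<tau> \<in> {a..b}. norm (z \<tau>) \<le> \<rho>}"
      using lt s0A by (force simp: A_def)
    then have "closure {a..<s0} \<subseteq> {\<tau> \<in> {a..b}. norm (z \<tau>) \<le> \<rho>}"
      using C by (rule closure_minimal)
    then have le: "\<And>\<tau>. \<tau> \<in> {a..s0} \<Longrightarrow> norm (z \<tau>) \<le> \<rho>"
      using as0 by (auto simp: closure_atLeastLessThan)
    have "norm (z s0) \<le> norm (z a) * exp (L * (s0 - a))"
      by (rule gs) (use s0A le \<rho> in \<open>auto simp: A_def intro: order_trans[OF le] less_imp_le\<close>)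
    also have "\<dots> \<le> norm (z a) * exp (L * (b - a))"
      using s0A L by (auto simp: A_def intro!: mult_left_mono mult_left_mono)
    finally show False using s0A \<rho> by (auto simp: A_def)
  qed
  then have "\<And>\<tau>. \<tau> \<in> {a..b} \<Longrightarrow> norm (z \<tau>) < \<rho>" by (force simp: A_def)
  then show ?thesis by (intro gs t) (use t \<rho> in force)
qed

lemma isol_uniq:
  assumes ab: "a \<le> b" and L: "0 \<le> L"
    and lip: "\<And>\<tau> x y. \<tau> \<in> {a..b} \<Longrightarrow> x \<in> cball 0 r \<Longrightarrow> y \<in> cball 0 r \<Longrightarrow> norm (G \<tau> x - G \<tau> y) \<le> L * norm (x - y)"
    and s1: "isol G z1 a b" and s2: "isol G z2 a b" and eq: "z1 a = z2 a"
    and in1: "\<And>\<tau>. \<tau> \<in> {a..b} \<Longrightarrow> z1 \<tau> \<in> cball 0 r"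
    and in2: "\<And>\<tau>. \<tau> \<in> {a..b} \<Longrightarrow> z2 \<tau> \<in> cball 0 r"
    and t: "t \<in> {a..b}"
  shows "z1 t = z2 t"
proof -
  have "norm (z1 t - z2 t) \<le> 0 * exp (L * (t - a))"
  proof (rule gronwall[where g = "\<lambda>t. norm (z1 t - z2 t)" and b = b])
    show "continuous_on {a..b} (\<lambda>t. norm (z1 t - z2 t))"
      by (intro continuous_intros isol_cont[OF s1 ab] isol_cont[OF s2 ab])
    fix t assume t: "t \<in> {a..b}"
    have "z1 t - z2 t = integral {a..t} (\<lambda>\<tau>. G \<tau> (z1 \<tau>)) - integral {a..t} (\<lambda>\<tau>. G \<tau> (z2 \<tau>))"
      using isol_int(2)[OF s1 ab t] isol_int(2)[OF s2 ab t] eq by simp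
    have i1: "(\<lambda>\<tau>. G \<tau> (z1 \<tau>)) integrable_on {a..t}"
      by (rule integrable_on_subinterval[OF isol_int(1)[OF s1 ab]]) (use t in auto)
    have i2: "(\<lambda>\<tau>. G \<tau> (z2 \<tau>)) integrable_on {a..t}"
      by (rule integrable_on_subinterval[OF isol_int(1)[OF s2 ab]]) (use t in auto)
    have "z1 t - z2 t = integral {a..t} (\<lambda>\<tau>. G \<tau> (z1 \<tau>) - G \<tau> (z2 \<tau>))"
      using \<open>z1 t - z2 t = _\<close> by (simp add: integral_diff[OF i1 i2])
    have zc: "continuous_on {a..t} (\<lambda>\<tau>. z1 \<tau> - z2 \<tau>)"
      using continuous_on_diff[OF isol_cont[OF s1 ab] isol_cont[OF s2 ab]] t
      by (elim continuous_on_subset) auto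
    have i3: "(\<lambda>\<tau>. L * norm (z1 \<tau> - z2 \<tau>)) integrable_on {a..t}"
      by (intro integrable_continuous_real continuous_intros zc)
    have "norm (integral {a..t} (\<lambda>\<tau>. G \<tau> (z1 \<tau>) - G \<tau> (z2 \<tau>))) \<le> integral {a..t} (\<lambda>\<tau>. L * norm (z1 \<tau> - z2 \<tau>))"
      by (rule integral_norm_bound_integral[OF integrable_diff[OF i1 i2] i3])
         (use t in \<open>auto intro!: lip in1 in2\<close>)
    also have "\<dots> = L * integral {a..t} (\<lambda>\<tau>. norm (z1 \<tau> - z2 \<tau>))" by (simp add: integral_mult_right)
    finally show "norm (z1 t - z2 t) \<le> 0 + L * integral {a..t} (\<lambda>\<tau>. norm (z1 \<tau> - z2 \<tau>))"
      using \<open>z1 t - z2 t = integral {a..t} _\<close> by simp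
  qed (use ab L t in auto)
  then show ?thesis by simp
qed

lemma pow_half_zero:
  fixes d K :: real
  assumes "\<And>n. d \<le> K * (1/2) ^ n"
  shows "d \<le> 0"
proof -
  have "(\<lambda>n. K * (1/2::real) ^ n) \<longlonglongrightarrow> K * 0"
    by (intro tendsto_intros LIMSEQ_power_zero) auto
  then show ?thesis using assms by (intro LIMSEQ_le_const[of "\<lambda>n. K * (1/2) ^ n"]) auto
qed

lemma isol_exist:
  fixes G :: "real \<Rightarrow> 'a::euclidean_space \<Rightarrow> 'a"
  assumes ab: "a \<le> b" and L: "0 \<le> L"
    and lip: "\<And>\<tau> x y. \<tau> \<in> {a..b} \<Longrightarrow> x \<in> cball 0 r \<Longrightarrow> y \<in> cball 0 r \<Longrightarrow> norm (G \<tau> x - G \<tau> y) \<le> L * norm (x - y)"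
    and G0: "\<And>\<tau>. \<tau> \<in> {a..b} \<Longrightarrow> G \<tau> 0 = 0"
    and integ: "\<And>y. continuous_on {a..b} y \<Longrightarrow> (\<And>\<tau>. \<tau> \<in> {a..b} \<Longrightarrow> y \<tau> \<in> cball 0 r) \<Longrightarrow> (\<lambda>\<tau>. G \<tau> (y \<tau>)) integrable_on {a..b}"
    and small: "norm x0 * exp (L * (b - a)) \<le> r"
  shows "\<exists>z. z a = x0 \<and> isol G z a b \<and> (\<forall>t\<in>{a..b}. norm (z t) \<le> norm x0 * exp (L * (t - a)))"
proof -
  define P where "P = (\<lambda>y t. x0 + integral {a..t} (\<lambda>\<tau>. G \<tau> (y \<tau>)))"
  define x where "x n = (P ^^ n) (\<lambda>t. x0)" for n
  have xS: "x (Suc n) = P (x n)" for n by (simp add: x_def)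
  define inv where "inv y \<longleftrightarrow> continuous_on {a..b} y \<and> (\<forall>t\<in>{a..b}. norm (y t) \<le> norm x0 * exp (L * (t - a)))" for y :: "real \<Rightarrow> 'a"
  have r0: "0 \<le> r" using small by (meson norm_ge_zero exp_ge_zero mult_nonneg_nonneg order_trans)
  have expmono: "exp (L * (t - a)) \<le> exp (L * (b - a))" if "t \<in> {a..b}" for t
    using that L by (auto intro!: mult_left_mono)
  have inb: "y t \<in> cball 0 r" if "inv y" "t \<in> {a..b}" for y t
  proof -
    have "norm (y t) \<le> norm x0 * exp (L * (t - a))" using that by (auto simp: inv_def)
    also have "\<dots> \<le> norm x0 * exp (L * (b - a))" using expmono[OF that(2)] by (simp add: mult_left_mono)
    finally show ?thesis using small by simp
  qed
  have Gbound: "norm (G \<tau> (y \<tau>)) \<le> L * norm (y \<tau>)" if "inv y" "\<tau> \<in> {a..b}" for y \<tau>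
  proof -
    have "norm (G \<tau> (y \<tau>) - G \<tau> 0) \<le> L * norm (y \<tau> - 0)"
      by (rule lip) (use that inb r0 in auto)
    then show ?thesis using G0[OF that(2)] by simp
  qed
  have Pint: "(\<lambda>\<tau>. G \<tau> (y \<tau>)) integrable_on {a..b}" if "inv y" for y
    by (rule integ) (use that inb in \<open>auto simp: inv_def\<close>)
  have Pint2: "(\<lambda>\<tau>. G \<tau> (y \<tau>)) integrable_on {a..t}" if "inv y" "t \<in> {a..b}" for y t
    by (rule integrable_on_subinterval[OF Pint[OF that(1)]]) (use that in auto)
  have Pinv: "inv (P y)" if y: "inv y" for y
  proof -
    have "continuous_on {a..b} (\<lambda>t. integral {a..t} (\<lambda>\<tau>. G \<tau> (y \<tau>)))"
      by (rule indefinite_integral_continuous_1[OF Pint[OF y]])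
    then have c: "continuous_on {a..b} (P y)" unfolding P_def
      by (rule continuous_on_add[OF continuous_on_const])
    have "norm (P y t) \<le> norm x0 * exp (L * (t - a))" if t: "t \<in> {a..b}" for t
    proof -
      have hi: "((\<lambda>\<tau>. norm x0 * (L * exp (L * (\<tau> - a)))) has_integral (norm x0 * (exp (L * (t - a)) - 1))) {a..t}"
        by (intro has_integral_mult_right exp_integral) (use t in auto)
      have "norm (integral {a..t} (\<lambda>\<tau>. G \<tau> (y \<tau>))) \<le> integral {a..t} (\<lambda>\<tau>. norm x0 * (L * exp (L * (\<tau> - a))))"
      proof (rule integral_norm_bound_integral[OF Pint2[OF y t] has_integral_integrable[OF hi]])
        fix \<tau> assume \<tau>: "\<tau> \<in> {a..t}"
        then have \<tau>': "\<tau> \<in> {a..b}" using t by auto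
        have "norm (G \<tau> (y \<tau>)) \<le> L * norm (y \<tau>)" by (rule Gbound[OF y \<tau>'])
        also have "\<dots> \<le> L * (norm x0 * exp (L * (\<tau> - a)))"
          using y \<tau>' L by (auto simp: inv_def intro!: mult_left_mono)
        finally show "norm (G \<tau> (y \<tau>)) \<le> norm x0 * (L * exp (L * (\<tau> - a)))" by (simp add: algebra_simps)
      qed
      also have "\<dots> = norm x0 * (exp (L * (t - a)) - 1)" using hi by (rule integral_unique)
      finally have "norm (integral {a..t} (\<lambda>\<tau>. G \<tau> (y \<tau>))) \<le> norm x0 * (exp (L * (t - a)) - 1)" .
      then show ?thesis unfolding P_def
        using norm_triangle_ineq[of x0 "integral {a..t} (\<lambda>\<tau>. G \<tau> (y \<tau>))"] by (simp add: algebra_simps)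
    qed
    with c show ?thesis by (auto simp: inv_def)
  qed
  have inv0: "inv (\<lambda>t. x0)"
  proof -
    have "norm x0 \<le> norm x0 * exp (L * (t - a))" if "t \<in> {a..b}" for t
      using that L by (simp add: mult_le_cancel_left1)
    then show ?thesis by (auto simp: inv_def)
  qed
  have xinv: "inv (x n)" for n
    by (induction n) (auto simp: x_def inv0 Pinv)
  define M where "M = 2 * r"
  have D: "\<forall>t\<in>{a..b}. norm (x (Suc n) t - x n t) \<le> M * (1/2) ^ n * exp (2 * L * (t - a))" for n
  proof (induction n)
    case 0
    show ?case
    proof
      fix t assume t: "t \<in> {a..b}"
      have "norm (x 1 t - x 0 t) \<le> norm (x 1 t) + norm (x 0 t)" by (rule norm_triangle_ineq4)
      also have "\<dots> \<le> r + r" using inb[OF xinv t] inb[OF xinv t] by (intro add_mono) auto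
      also have "\<dots> \<le> M * exp (2 * L * (t - a))"
        using t L r0 by (auto simp: M_def mult_le_cancel_left1)
      finally show "norm (x (Suc 0) t - x 0 t) \<le> M * (1 / 2) ^ 0 * exp (2 * L * (t - a))" by simp
    qed
  next
    case (Suc n)
    show ?case
    proof
      fix t assume t: "t \<in> {a..b}"
      have i1: "(\<lambda>\<tau>. G \<tau> (x (Suc n) \<tau>)) integrable_on {a..t}" by (rule Pint2[OF xinv t])
      have i2: "(\<lambda>\<tau>. G \<tau> (x n \<tau>)) integrable_on {a..t}" by (rule Pint2[OF xinv t])
      have eq: "x (Suc (Suc n)) t - x (Suc n) t = integral {a..t} (\<lambda>\<tau>. G \<tau> (x (Suc n) \<tau>) - G \<tau> (x n \<tau>))"
      proof -
        have a1: "x (Suc (Suc n)) t = x0 + integral {a..t} (\<lambda>\<tau>. G \<tau> (x (Suc n) \<tau>))"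
          using xS[of "Suc n"] unfolding P_def by (rule fun_cong)
        have a2: "x (Suc n) t = x0 + integral {a..t} (\<lambda>\<tau>. G \<tau> (x n \<tau>))"
          using xS[of n] unfolding P_def by (rule fun_cong)
        show ?thesis unfolding a1 a2 by (simp add: integral_diff[OF i1 i2])
      qed
      define K where "K = M * (1/2) ^ n / 2"
      have hi: "((\<lambda>\<tau>. K * (2 * L * exp (2 * L * (\<tau> - a)))) has_integral (K * (exp (2 * L * (t - a)) - 1))) {a..t}"
        by (intro has_integral_mult_right exp_integral) (use t in auto)
      have "norm (integral {a..t} (\<lambda>\<tau>. G \<tau> (x (Suc n) \<tau>) - G \<tau> (x n \<tau>))) \<le> integral {a..t} (\<lambda>\<tau>. K * (2 * L * exp (2 * L * (\<tau> - a))))"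
      proof (rule integral_norm_bound_integral[OF integrable_diff[OF i1 i2] has_integral_integrable[OF hi]])
        fix \<tau> assume \<tau>: "\<tau> \<in> {a..t}"
        then have \<tau>': "\<tau> \<in> {a..b}" using t by auto
        have "norm (G \<tau> (x (Suc n) \<tau>) - G \<tau> (x n \<tau>)) \<le> L * norm (x (Suc n) \<tau> - x n \<tau>)"
          by (rule lip[OF \<tau>' inb[OF xinv \<tau>'] inb[OF xinv \<tau>']])
        also have "\<dots> \<le> L * (M * (1/2) ^ n * exp (2 * L * (\<tau> - a)))"
          using Suc.IH \<tau>' L by (intro mult_left_mono) auto
        finally show "norm (G \<tau> (x (Suc n) \<tau>) - G \<tau> (x n \<tau>)) \<le> K * (2 * L * exp (2 * L * (\<tau> - a)))"
          by (simp add: K_def algebra_simps)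
      qed
      also have "\<dots> = K * (exp (2 * L * (t - a)) - 1)" using hi by (rule integral_unique)
      also have "\<dots> \<le> K * exp (2 * L * (t - a))" using r0 by (intro mult_left_mono) (auto simp: K_def M_def)
      finally show "norm (x (Suc (Suc n)) t - x (Suc n) t) \<le> M * (1/2) ^ Suc n * exp (2 * L * (t - a))"
        using eq by (simp add: K_def)
    qed
  qed
  define E where "E = exp (2 * L * (b - a))"
  have M0: "0 \<le> M" using r0 by (simp add: M_def)
  have D2: "norm (x (Suc n) t - x n t) \<le> M * E * (1/2) ^ n" if t: "t \<in> {a..b}" for n t
  proof -
    have "norm (x (Suc n) t - x n t) \<le> M * (1/2) ^ n * exp (2 * L * (t - a))" using D t by blast
    also have "\<dots> \<le> M * (1/2) ^ n * E" unfolding E_def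
      using t L M0 by (intro mult_left_mono) (auto intro!: mult_left_mono)
    finally show ?thesis by (simp add: algebra_simps)
  qed
  have C1: "norm (x (n + k) t - x n t) \<le> 2 * M * E * ((1/2) ^ n - (1/2) ^ (n + k))" if t: "t \<in> {a..b}" for n k t
  proof (induction k)
    case 0 then show ?case by simp
  next
    case (Suc k)
    have "norm (x (n + Suc k) t - x n t) \<le> norm (x (Suc (n + k)) t - x (n + k) t) + norm (x (n + k) t - x n t)"
      using norm_triangle_ineq[of "x (Suc (n + k)) t - x (n + k) t" "x (n + k) t - x n t"] by simp
    also have "\<dots> \<le> M * E * (1/2) ^ (n + k) + 2 * M * E * ((1/2) ^ n - (1/2) ^ (n + k))"
      by (intro add_mono D2 t Suc.IH)
    also have "\<dots> = 2 * M * E * ((1/2) ^ n - (1/2) ^ (n + Suc k))" by (simp add: algebra_simps)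
    finally show ?case .
  qed
  have E0: "0 \<le> E" by (simp add: E_def)
  have ME0: "0 \<le> M * E" using M0 E0 by simp
  have P1: "0 < 2 * M * E + 1"
  proof -
    have "0 \<le> 2 * M * E" using M0 E0 by simp
    then show ?thesis by linarith
  qed
  have C2: "norm (x m t - x n t) \<le> 2 * M * E * (1/2) ^ n" if t: "t \<in> {a..b}" and mn: "n \<le> m" for n m t
  proof -
    obtain k where m: "m = n + k" using mn le_Suc_ex by blast
    have "norm (x m t - x n t) \<le> 2 * M * E * ((1/2) ^ n - (1/2) ^ (n + k))" unfolding m by (rule C1[OF t])
    also have "\<dots> \<le> 2 * M * E * (1/2) ^ n" using M0 E0 ME0 P1 by (intro mult_left_mono) auto
    finally show ?thesis .
  qed
  have conv: "convergent (\<lambda>n. x n t)" if t: "t \<in> {a..b}" for t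
  proof -
    have "Cauchy (\<lambda>n. x n t)"
    proof (rule CauchyI)
      fix e :: real assume e: "0 < e"
      have "0 < e / (2 * M * E + 1)" using e P1 by (intro divide_pos_pos) auto
      then obtain N where N: "(1/2::real) ^ N < e / (2 * M * E + 1)"
        using real_arch_pow_inv[of "e / (2 * M * E + 1)" "1/2"] by auto
      have "2 * M * E * (1/2) ^ N < e"
      proof -
        have "2 * M * E * (1/2) ^ N \<le> (2 * M * E + 1) * (1/2) ^ N" by (simp add: distrib_right)
        also have "\<dots> < (2 * M * E + 1) * (e / (2 * M * E + 1))"
          using N M0 E0 ME0 P1 by (intro mult_strict_left_mono) auto
        also have "\<dots> = e" using M0 E0 ME0 P1 by simp
        finally show ?thesis .
      qed
      moreover have "(1/2::real) ^ n \<le> (1/2) ^ N" if "N \<le> n" for n using that by (simp add: power_decreasing)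
      ultimately have "\<forall>m\<ge>N. \<forall>n\<ge>N. norm (x m t - x n t) < e"
      proof (intro allI impI)
        fix m n assume "N \<le> m" "N \<le> n"
        show "norm (x m t - x n t) < e"
        proof (cases "n \<le> m")
          case True
          have "norm (x m t - x n t) \<le> 2 * M * E * (1/2) ^ n" by (rule C2[OF t True])
          also have "\<dots> \<le> 2 * M * E * (1/2) ^ N" using \<open>N \<le> n\<close> M0 E0 ME0 P1 by (intro mult_left_mono power_decreasing) auto
          finally show ?thesis using \<open>2 * M * E * (1/2) ^ N < e\<close> by simp
        next
          case False
          have "norm (x m t - x n t) = norm (x n t - x m t)" by (rule norm_minus_commute)
          also have "\<dots> \<le> 2 * M * E * (1/2) ^ m" using False by (intro C2[OF t]) auto
          also have "\<dots> \<le> 2 * M * E * (1/2) ^ N" using \<open>N \<le> m\<close> M0 E0 ME0 P1 by (intro mult_left_mono power_decreasing) auto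
          finally show ?thesis using \<open>2 * M * E * (1/2) ^ N < e\<close> by simp
        qed
      qed
      then show "\<exists>N. \<forall>m\<ge>N. \<forall>n\<ge>N. norm (x m t - x n t) < e" by blast
    qed
    then show ?thesis by (simp add: Cauchy_convergent_iff)
  qed
  define z where "z t = lim (\<lambda>n. x n t)" for t
  have zlim: "(\<lambda>n. x n t) \<longlonglongrightarrow> z t" if "t \<in> {a..b}" for t
    using conv[OF that] by (simp add: z_def convergent_LIMSEQ_iff)
  have U: "norm (z t - x n t) \<le> 2 * M * E * (1/2) ^ n" if t: "t \<in> {a..b}" for t n
  proof (rule LIMSEQ_le_const2)
    show "(\<lambda>m. norm (x m t - x n t)) \<longlonglongrightarrow> norm (z t - x n t)"
      by (intro tendsto_intros zlim t)
    show "\<exists>N. \<forall>m\<ge>N. norm (x m t - x n t) \<le> 2 * M * E * (1/2) ^ n"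
      using C2[OF t] by blast
  qed
  have xa: "x n a = x0" for n
    by (cases n) (simp_all add: x_def P_def)
  have za: "z a = x0"
    using zlim[of a] ab by (simp add: xa LIMSEQ_const_iff)
  have zbound: "norm (z t) \<le> norm x0 * exp (L * (t - a))" if t: "t \<in> {a..b}" for t
  proof (rule LIMSEQ_le_const2)
    show "(\<lambda>n. norm (x n t)) \<longlonglongrightarrow> norm (z t)" by (intro tendsto_intros zlim t)
    show "\<exists>N. \<forall>n\<ge>N. norm (x n t) \<le> norm x0 * exp (L * (t - a))"
      using xinv t by (auto simp: inv_def)
  qed
  have zcont: "continuous_on {a..b} z"
  proof (rule uniform_limit_theorem[where f = x and F = sequentially])
    show "\<forall>\<^sub>F n in sequentially. continuous_on {a..b} (x n)"
      using xinv by (auto simp: inv_def)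
    show "uniform_limit {a..b} x z sequentially"
    proof (rule uniform_limitI)
      fix e :: real assume e: "0 < e"
      have "0 < e / (2 * M * E + 1)" using e P1 by (intro divide_pos_pos) auto
      then obtain N where N: "(1/2::real) ^ N < e / (2 * M * E + 1)"
        using real_arch_pow_inv[of "e / (2 * M * E + 1)" "1/2"] by auto
      have ne: "2 * M * E * (1/2) ^ n < e" if "N \<le> n" for n
      proof -
        have "2 * M * E * (1/2) ^ n \<le> (2 * M * E + 1) * (1/2) ^ N"
          using that M0 E0 ME0 P1 by (intro mult_mono power_decreasing) auto
        also have "\<dots> < (2 * M * E + 1) * (e / (2 * M * E + 1))"
          using N M0 E0 ME0 P1 by (intro mult_strict_left_mono) auto
        also have "\<dots> = e" using M0 E0 ME0 P1 by simp
        finally show ?thesis .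
      qed
      have "\<forall>n\<ge>N. \<forall>t\<in>{a..b}. dist (x n t) (z t) < e"
      proof (intro allI impI ballI)
        fix n t assume "N \<le> n" "t \<in> {a..b}"
        have "dist (x n t) (z t) = norm (z t - x n t)" by (simp add: dist_norm norm_minus_commute)
        also have "\<dots> \<le> 2 * M * E * (1/2) ^ n" by (rule U) fact
        also have "\<dots> < e" by (rule ne) fact
        finally show "dist (x n t) (z t) < e" .
      qed
      then show "\<forall>\<^sub>F n in sequentially. \<forall>t\<in>{a..b}. dist (x n t) (z t) < e"
        by (auto simp: eventually_sequentially)
    qed
  qed simp
  have zinv: "inv z" using zcont zbound by (auto simp: inv_def)
  have "isol G z a b" unfolding isol_def
  proof
    fix t assume t: "t \<in> {a..b}"
    define I where "I = integral {a..t} (\<lambda>\<tau>. G \<tau> (z \<tau>))"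
    have iz: "(\<lambda>\<tau>. G \<tau> (z \<tau>)) integrable_on {a..t}" by (rule Pint2[OF zinv t])
    have "norm (I - (z t - x0)) \<le> (2 * M * E * (L * (b - a) + 1)) * (1/2) ^ n" for n
    proof -
      have ixn: "(\<lambda>\<tau>. G \<tau> (x n \<tau>)) integrable_on {a..t}" by (rule Pint2[OF xinv t])
      have "x (Suc n) t = x0 + integral {a..t} (\<lambda>\<tau>. G \<tau> (x n \<tau>))"
        using xS[of n] unfolding P_def by (rule fun_cong)
      then have "x (Suc n) t - x0 = integral {a..t} (\<lambda>\<tau>. G \<tau> (x n \<tau>))" by simp
      then have e1: "I - (x (Suc n) t - x0) = integral {a..t} (\<lambda>\<tau>. G \<tau> (z \<tau>) - G \<tau> (x n \<tau>))"
        by (simp add: I_def integral_diff[OF iz ixn])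
      have "norm (integral {a..t} (\<lambda>\<tau>. G \<tau> (z \<tau>) - G \<tau> (x n \<tau>))) \<le> integral {a..t} (\<lambda>\<tau>. L * (2 * M * E * (1/2) ^ n))"
      proof (rule integral_norm_bound_integral[OF integrable_diff[OF iz ixn]])
        show "(\<lambda>\<tau>. L * (2 * M * E * (1/2) ^ n)) integrable_on {a..t}" by (rule integrable_const_ivl)
        fix \<tau> assume \<tau>: "\<tau> \<in> {a..t}"
        then have \<tau>': "\<tau> \<in> {a..b}" using t by auto
        have "norm (G \<tau> (z \<tau>) - G \<tau> (x n \<tau>)) \<le> L * norm (z \<tau> - x n \<tau>)"
          by (rule lip[OF \<tau>' inb[OF zinv \<tau>'] inb[OF xinv \<tau>']])
        also have "\<dots> \<le> L * (2 * M * E * (1/2) ^ n)" using U[OF \<tau>'] L by (intro mult_left_mono)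
        finally show "norm (G \<tau> (z \<tau>) - G \<tau> (x n \<tau>)) \<le> L * (2 * M * E * (1/2) ^ n)" .
      qed
      also have "\<dots> = (t - a) * (L * (2 * M * E * (1/2) ^ n))" using t by simp
      also have "\<dots> \<le> (b - a) * (L * (2 * M * E * (1/2) ^ n))"
        using t L M0 E0 ME0 P1 by (intro mult_right_mono) auto
      finally have n1: "norm (I - (x (Suc n) t - x0)) \<le> (b - a) * (L * (2 * M * E * (1/2) ^ n))"
        using e1 by simp
      have n2: "norm (x (Suc n) t - z t) \<le> 2 * M * E * (1/2) ^ n"
      proof -
        have "norm (x (Suc n) t - z t) \<le> 2 * M * E * (1/2) ^ Suc n"
          using U[OF t, of "Suc n"] by (simp add: norm_minus_commute)
        also have "\<dots> \<le> 2 * M * E * (1/2) ^ n" using M0 E0 ME0 P1 by (intro mult_left_mono) auto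
        finally show ?thesis .
      qed
      have "norm (I - (z t - x0)) \<le> norm (I - (x (Suc n) t - x0)) + norm (x (Suc n) t - z t)"
        using norm_triangle_ineq[of "I - (x (Suc n) t - x0)" "x (Suc n) t - z t"]
        by (simp add: algebra_simps)
      also have "\<dots> \<le> (b - a) * (L * (2 * M * E * (1/2) ^ n)) + 2 * M * E * (1/2) ^ n"
        by (intro add_mono n1 n2)
      also have "\<dots> = (2 * M * E * (L * (b - a) + 1)) * (1/2) ^ n" by (simp add: algebra_simps)
      finally show ?thesis .
    qed
    then have "norm (I - (z t - x0)) \<le> 0" by (rule pow_half_zero)
    then have "I = z t - x0" by simp
    then show "((\<lambda>\<tau>. G \<tau> (z \<tau>)) has_integral (z t - z a)) {a..t}"
      using iz za by (simp add: I_def has_integral_integrable_integral)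
  qed
  with za zbound show ?thesis by blast
qed

lemma measurable_on_subset_UNIV:
  assumes "f measurable_on UNIV" "S \<in> sets lebesgue"
  shows "f measurable_on S"
  using measurable_on_restrict[OF assms] measurable_on_UNIV by blast

lemma pw_meas:
  fixes g :: "real \<Rightarrow> 'c::euclidean_space"
  assumes pw: "pw_continuous_nonneg g" and a: "0 \<le> a"
  shows "g measurable_on {a..b}"
proof -
  obtain S where S: "finite S" "continuous_on ({0..max a b} - S) g"
    using pw a unfolding pw_continuous_nonneg_def by (meson max.coboundedI1)
  have Sl: "{a..b} - S \<in> sets lebesgue"
  proof (rule sets.Diff)
    show "S \<in> sets lebesgue" using S(1) by (intro negligible_imp_sets negligible_finite)
  qed simp
  have "continuous_on ({a..b} - S) g"
    by (rule continuous_on_subset[OF S(2)]) (use a in auto)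
  then have "g \<in> borel_measurable (lebesgue_on ({a..b} - S))"
    by (rule continuous_imp_measurable_on_sets_lebesgue) (rule Sl)
  then have "g measurable_on ({a..b} - S)"
    by (subst measurable_on_iff_borel_measurable) (rule Sl)
  then show ?thesis
    by (rule measurable_on_spike_set) (use S(1) in \<open>auto intro: negligible_finite negligible_subset\<close>)
qed

lemma aux_cancel: "0 < c \<Longrightarrow> 0 < d \<Longrightarrow> (x * c / d) * (d / c) = (x::real)"
  by (simp add: field_simps)

lemma cara_cont:
  fixes g :: "real \<Rightarrow> 'x::euclidean_space \<Rightarrow> 'c::euclidean_space"
  assumes gm: "\<And>x. x \<in> D \<Longrightarrow> (\<lambda>t. g t x) measurable_on {a..b}"
    and gc: "\<And>t. t \<in> {a..b} \<Longrightarrow> continuous_on D (g t)"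
    and yc: "continuous_on {a..b} y" and yD: "\<And>t. t \<in> {a..b} \<Longrightarrow> y t \<in> D"
  shows "(\<lambda>t. g t (y t)) measurable_on {a..b}"
proof -
  define q where "q n j = a + real j * (b - a) / real (Suc n)" for n j :: nat
  define I where "I n j = {q n j..<q n (Suc j)}" for n j
  define A where "A n t = (\<Sum>j<Suc n. indicat_real (I n j) t *\<^sub>R g t (y (q n j)))" for n t
  have qin: "q n j \<in> {a..b}" if "a \<le> b" "j \<le> Suc n" for n j
  proof -
    have "real j * (b - a) / real (Suc n) \<le> real (Suc n) * (b - a) / real (Suc n)"
      using that by (intro divide_right_mono mult_right_mono) auto
    then show ?thesis using that by (auto simp: q_def)
  qed
  have Ameas: "A n measurable_on {a..b}" for n
    unfolding A_def
  proof (intro measurable_on_sum measurable_on_scaleR)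
    fix j assume j: "j \<in> {..<Suc n}"
    show "indicat_real (I n j) measurable_on {a..b}"
      by (rule measurable_on_subset_UNIV) (auto simp: I_def intro!: indicator_measurable_on)
    show "(\<lambda>t. g t (y (q n j))) measurable_on {a..b}"
    proof (cases "a \<le> b")
      case True
      then show ?thesis using j by (intro gm yD qin) auto
    next
      case False
      then have "{a..b} = {}" by auto
      then show ?thesis by (simp add: measurable_on_def) (auto intro!: exI[of _ "\<lambda>n x. 0"])
    qed
  qed simp
  have lim: "(\<lambda>n. A n t) \<longlonglongrightarrow> g t (y t)" if t: "t \<in> {a..b} - {b}" for t
  proof -
    from t have ab: "a < b" "a \<le> t" "t < b" by auto
    define k where "k n = nat \<lfloor>(t - a) * real (Suc n) / (b - a)\<rfloor>" for n
    have kprop: "q n (k n) \<le> t \<and> t < q n (Suc (k n)) \<and> k n < Suc n" for n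
    proof -
      define u where "u = (t - a) * real (Suc n) / (b - a)"
      have u0: "0 \<le> u" using ab by (auto simp: u_def)
      have u1: "u < real (Suc n)"
      proof -
        have "(t - a) * real (Suc n) < (b - a) * real (Suc n)" using ab by (intro mult_strict_right_mono) auto
        then show ?thesis using ab by (simp add: u_def pos_divide_less_eq mult.commute)
      qed
      have kn: "k n = nat \<lfloor>u\<rfloor>" by (simp add: k_def u_def)
      have "0 \<le> \<lfloor>u\<rfloor>" using u0 by simp
      then have ke: "real (k n) = of_int \<lfloor>u\<rfloor>" by (simp add: kn)
      have fl: "real (k n) \<le> u" "u < real (k n) + 1"
        unfolding ke by (rule of_int_floor_le, rule real_of_int_floor_add_one_gt)
      have qe: "q n j = a + real j * ((b - a) / real (Suc n))" for j by (simp add: q_def)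
      have "real (k n) * ((b - a) / real (Suc n)) \<le> u * ((b - a) / real (Suc n))"
        using fl ab by (intro mult_right_mono) auto
      also have "u * ((b - a) / real (Suc n)) = t - a" unfolding u_def by (rule aux_cancel) (use ab in auto)
      finally have 1: "q n (k n) \<le> t" by (simp add: qe)
      have "t - a = u * ((b - a) / real (Suc n))" unfolding u_def by (rule aux_cancel[symmetric]) (use ab in auto)
      also have "\<dots> < (real (k n) + 1) * ((b - a) / real (Suc n))"
        using fl ab by (intro mult_strict_right_mono) auto
      finally have 2: "t < q n (Suc (k n))" by (simp add: qe algebra_simps)
      have "k n < Suc n" using fl u1 by linarith
      with 1 2 show ?thesis by blast
    qed
    have Aeq: "A n t = g t (y (q n (k n)))" for n
    proof -
      have ind: "indicat_real (I n j) t = (if j = k n then 1 else 0)" if "j < Suc n" for j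
      proof (cases "j = k n")
        case True then show ?thesis using kprop[of n] by (simp add: I_def)
      next
        case False
        have "t \<notin> I n j"
        proof
          assume "t \<in> I n j"
          then have h: "q n j \<le> t" "t < q n (Suc j)" by (auto simp: I_def)
          have mono: "q n i \<le> q n i'" if "i \<le> i'" for i i'
            using that ab by (auto simp: q_def intro!: divide_right_mono mult_right_mono)
          show False
          proof (cases "j < k n")
            case True
            then have "q n (Suc j) \<le> q n (k n)" by (intro mono) auto
            then show False using h kprop[of n] by auto
          next
            case False
            then have "Suc (k n) \<le> j" using \<open>j \<noteq> k n\<close> by auto
            then have "q n (Suc (k n)) \<le> q n j" by (intro mono)
            then show False using h kprop[of n] by auto
          qed
        qed
        then show ?thesis using False by simp
      qed
      have "A n t = (\<Sum>j<Suc n. (if j = k n then g t (y (q n j)) else 0))"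
        unfolding A_def by (rule sum.cong) (auto simp: ind)
      also have "\<dots> = g t (y (q n (k n)))" using kprop[of n] by simp
      finally show ?thesis .
    qed
    have qlim: "(\<lambda>n. q n (k n)) \<longlonglongrightarrow> t"
    proof -
      have "(\<lambda>n. q n (k n) - t) \<longlonglongrightarrow> 0"
      proof (rule Lim_null_comparison)
        show "\<forall>\<^sub>F n in sequentially. norm (q n (k n) - t) \<le> (b - a) / real (Suc n)"
        proof (intro always_eventually allI)
          fix n
          have "q n (Suc (k n)) = q n (k n) + (b - a) / real (Suc n)"
            by (simp add: q_def distrib_right add_divide_distrib)
          then show "norm (q n (k n) - t) \<le> (b - a) / real (Suc n)" using kprop[of n] by auto
        qed
        have "(\<lambda>n. (b - a) / real n) \<longlonglongrightarrow> 0" by (rule lim_const_over_n)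
        then show "(\<lambda>n. (b - a) / real (Suc n)) \<longlonglongrightarrow> 0" by (rule LIMSEQ_Suc)
      qed
      then show ?thesis by (simp add: LIM_zero_iff)
    qed
    have qin': "q n (k n) \<in> {a..b}" for n using kprop[of n] ab by (intro qin) auto
    have ylim: "(\<lambda>n. y (q n (k n))) \<longlonglongrightarrow> y t"
      by (rule continuous_on_tendsto_compose[OF yc qlim]) (use t qin' in auto)
    have "(\<lambda>n. g t (y (q n (k n)))) \<longlonglongrightarrow> g t (y t)"
      using continuous_on_tendsto_compose[OF gc[of t] ylim] t qin' yD by auto
    then show ?thesis by (simp add: Aeq)
  qed
  show ?thesis
    by (rule measurable_on_limit[where f = A and N = "{b}"]) (use Ameas lim in auto)
qed

lemma cara_meas:
  fixes g :: "real \<Rightarrow> 'x::euclidean_space \<Rightarrow> 'w::euclidean_space \<Rightarrow> 'c::euclidean_space"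
  assumes gm: "\<And>x w. (\<lambda>t. g t x w) measurable_on {a..b}"
    and gc: "\<And>t. t \<in> {a..b} \<Longrightarrow> continuous_on UNIV (\<lambda>p. g t (fst p) (snd p))"
    and yc: "continuous_on {a..b} y" and wm: "w measurable_on {a..b}"
  shows "(\<lambda>t. g t (y t) (w t)) measurable_on {a..b}"
proof -
  obtain N c where N: "negligible N" and cc: "\<And>n. continuous_on UNIV (c n)"
    and cl: "\<And>x. x \<notin> N \<Longrightarrow> (\<lambda>n. c n x) \<longlonglongrightarrow> (if x \<in> {a..b} then w x else 0)"
    using wm unfolding measurable_on_def by blast
  have m: "(\<lambda>t. g t (y t) (c n t)) measurable_on {a..b}" for n
  proof -
    have 1: "\<And>x. x \<in> UNIV \<Longrightarrow> (\<lambda>t. g t (fst x) (snd x)) measurable_on {a..b}" using gm by blast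
    have 3: "continuous_on {a..b} (\<lambda>t. (y t, c n t))"
      by (intro continuous_intros yc continuous_on_subset[OF cc]) auto
    show ?thesis
      using cara_cont[where D = UNIV and g = "\<lambda>t p. g t (fst p) (snd p)" and y = "\<lambda>t. (y t, c n t)", OF 1 gc 3]
      by simp
  qed
  show ?thesis
  proof (rule measurable_on_limit[OF m N])
    fix t assume t: "t \<in> {a..b} - N"
    then have "(\<lambda>n. c n t) \<longlonglongrightarrow> w t" using cl[of t] by simp
    then have "(\<lambda>n. (y t, c n t)) \<longlonglongrightarrow> (y t, w t)" by (intro tendsto_intros)
    from continuous_on_tendsto_compose[OF gc this] t
    show "(\<lambda>n. g t (y t) (c n t)) \<longlonglongrightarrow> g t (y t) (w t)" by simp
  qed
qed

lemma lip_cont: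
  assumes "loc_lipschitz_in_x D g" "0 \<le> t"
  shows "continuous_on D (g t)"
  unfolding continuous_on_iff
proof (intro ballI allI impI)
  fix x0 and e :: real assume x0: "x0 \<in> D" and e: "0 < e"
  obtain r L where r: "r > 0" and L: "\<And>x y. x \<in> ball x0 r \<inter> D \<Longrightarrow> y \<in> ball x0 r \<inter> D \<Longrightarrow> norm (g t x - g t y) \<le> L * dist x y"
    using assms x0 unfolding loc_lipschitz_in_x_def by (metis atLeastAtMost_iff order_refl)
  define d where "d = min r (e / (\<bar>L\<bar> + 1))"
  have d: "d > 0" using r e by (auto simp: d_def)
  show "\<exists>d>0. \<forall>x'\<in>D. dist x' x0 < d \<longrightarrow> dist (g t x') (g t x0) < e"
  proof (intro exI conjI ballI impI, rule d)
    fix x' assume x': "x' \<in> D" "dist x' x0 < d"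
    have "dist (g t x') (g t x0) \<le> L * dist x' x0"
      using L[of x' x0] x' x0 r by (auto simp: dist_norm d_def norm_minus_commute dist_commute)
    also have "\<dots> \<le> \<bar>L\<bar> * dist x' x0" by (simp add: mult_right_mono)
    also have "\<dots> \<le> \<bar>L\<bar> * d" using x' by (intro mult_left_mono) auto
    also have "\<dots> < (\<bar>L\<bar> + 1) * (e / (\<bar>L\<bar> + 1))"
    proof -
      have "\<bar>L\<bar> * d \<le> \<bar>L\<bar> * (e / (\<bar>L\<bar> + 1))" by (intro mult_left_mono) (auto simp: d_def)
      also have "\<dots> < (\<bar>L\<bar> + 1) * (e / (\<bar>L\<bar> + 1))" using e by (intro mult_strict_right_mono) auto
      finally show ?thesis .
    qed
    also have "\<dots> = e" by simp
    finally show "dist (g t x') (g t x0) < e" .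
  qed
qed

lemma isol_cong:
  assumes "isol G z a b" "\<And>t. t \<in> {a..b} \<Longrightarrow> z' t = z t"
  shows "isol G z' a b"
  unfolding isol_def
proof
  fix t assume t: "t \<in> {a..b}"
  have h: "((\<lambda>\<tau>. G \<tau> (z \<tau>)) has_integral (z t - z a)) {a..t}" using assms(1) t by (auto simp: isol_def)
  have e: "z' t - z' a = z t - z a" using assms(2)[of t] assms(2)[of a] t by auto
  have "((\<lambda>\<tau>. G \<tau> (z' \<tau>)) has_integral (z t - z a)) {a..t}"
  proof (rule has_integral_spike_finite[where S = "{}", OF _ _ h])
    fix \<tau> assume "\<tau> \<in> {a..t} - {}"
    then have "\<tau> \<in> {a..b}" using t by auto
    then show "G \<tau> (z' \<tau>) = G \<tau> (z \<tau>)" using assms(2) by simp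
  qed simp
  then show "((\<lambda>\<tau>. G \<tau> (z' \<tau>)) has_integral (z' t - z' a)) {a..t}" by (simp only: e)
qed

lemma isol_sub:
  assumes sol: "isol G z a b" and "a \<le> c" "c \<le> d" "d \<le> b"
  shows "isol G z c d"
  unfolding isol_def
proof
  fix t assume t: "t \<in> {c..d}"
  have ab: "a \<le> b" using assms by auto
  have int: "(\<lambda>\<tau>. G \<tau> (z \<tau>)) integrable_on {a..t}"
    by (rule integrable_on_subinterval[OF isol_int(1)[OF sol ab]]) (use t assms in auto)
  have "integral {a..c} (\<lambda>\<tau>. G \<tau> (z \<tau>)) + integral {c..t} (\<lambda>\<tau>. G \<tau> (z \<tau>)) = integral {a..t} (\<lambda>\<tau>. G \<tau> (z \<tau>))"
    by (rule Henstock_Kurzweil_Integration.integral_combine) (use t assms int in auto)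
  moreover have "z c = z a + integral {a..c} (\<lambda>\<tau>. G \<tau> (z \<tau>))" by (rule isol_int(2)[OF sol ab]) (use assms in auto)
  moreover have "z t = z a + integral {a..t} (\<lambda>\<tau>. G \<tau> (z \<tau>))" by (rule isol_int(2)[OF sol ab]) (use assms t in auto)
  ultimately have "integral {c..t} (\<lambda>\<tau>. G \<tau> (z \<tau>)) = z t - z c" by (simp add: algebra_simps)
  moreover have "(\<lambda>\<tau>. G \<tau> (z \<tau>)) integrable_on {c..t}"
    by (rule integrable_on_subinterval[OF int]) (use t assms in auto)
  ultimately show "((\<lambda>\<tau>. G \<tau> (z \<tau>)) has_integral (z t - z c)) {c..t}"
    by (simp add: has_integral_integrable_integral)
qed

lemma isol_concat:
  assumes s1: "isol G z a b" and s2: "isol G z b c" and ab: "a \<le> b"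
  shows "isol G z a c"
  unfolding isol_def
proof
  fix t assume t: "t \<in> {a..c}"
  show "((\<lambda>\<tau>. G \<tau> (z \<tau>)) has_integral (z t - z a)) {a..t}"
  proof (cases "t \<le> b")
    case True then show ?thesis using s1 t by (auto simp: isol_def)
  next
    case False
    have "((\<lambda>\<tau>. G \<tau> (z \<tau>)) has_integral (z b - z a)) {a..b}" using s1 ab by (auto simp: isol_def)
    moreover have "((\<lambda>\<tau>. G \<tau> (z \<tau>)) has_integral (z t - z b)) {b..t}" using s2 t False by (auto simp: isol_def)
    ultimately have "((\<lambda>\<tau>. G \<tau> (z \<tau>)) has_integral ((z b - z a) + (z t - z b))) {a..t}"
      by (rule has_integral_combine[rotated 2]) (use ab False in auto)
    then show ?thesis by simp
  qed
qed

lemma isol_shift: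
  assumes sol: "isol G z a b"
    and per: "\<And>s. s \<in> {a - c..b - c} \<Longrightarrow> G (s + c) (z (s + c)) = G s (z (s + c))"
  shows "isol G (\<lambda>s. z (s + c)) (a - c) (b - c)"
  unfolding isol_def
proof
  fix t assume t: "t \<in> {a - c..b - c}"
  have "((\<lambda>\<tau>. G \<tau> (z \<tau>)) has_integral (z (t + c) - z a)) {a..t + c}"
    using sol t by (auto simp: isol_def)
  then have "((\<lambda>\<tau>. G \<tau> (z \<tau>)) has_integral (z (t + c) - z a)) {(a - c) + c..t + c}" by simp
  then have "(((\<lambda>\<tau>. G \<tau> (z \<tau>)) \<circ> (+) c) has_integral (z (t + c) - z a)) {a - c..t}"
    by (simp only: has_integral_shift_Icc_real)
  moreover have "((\<lambda>\<tau>. G \<tau> (z \<tau>)) \<circ> (+) c) = (\<lambda>s. G (s + c) (z (s + c)))"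
    by (simp add: o_def add.commute)
  ultimately have h: "((\<lambda>s. G (s + c) (z (s + c))) has_integral (z (t + c) - z a)) {a - c..t}" by simp
  have "((\<lambda>s. G s (z (s + c))) has_integral (z (t + c) - z a)) {a - c..t}"
  proof (rule has_integral_spike_finite[where S = "{}", OF _ _ h])
    fix s assume "s \<in> {a - c..t} - {}"
    then have "s \<in> {a - c..b - c}" using t by auto
    then show "G s (z (s + c)) = G (s + c) (z (s + c))" using per by metis
  qed simp
  then show "((\<lambda>s. G s (z (s + c))) has_integral (z (t + c) - z (a - c + c))) {a - c..t}" by simp
qed

lemma per_nat:
  assumes "\<And>t. t \<ge> 0 \<Longrightarrow> h (t + Tp) = h t" "t \<ge> 0" "Tp \<ge> 0"
  shows "h (t + real m * Tp) = h t"
proof (induction m)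
  case (Suc m)
  have "h (t + real (Suc m) * Tp) = h ((t + real m * Tp) + Tp)" by (simp add: algebra_simps)
  also have "\<dots> = h (t + real m * Tp)" using assms by (intro assms(1)) auto
  finally show ?case using Suc by simp
qed simp

lemma decomp:
  fixes t Tp :: real
  assumes "t \<ge> 0" "Tp > 0"
  obtains m s where "t = s + real m * Tp" "0 \<le> s" "s < Tp"
proof -
  define m where "m = nat \<lfloor>t / Tp\<rfloor>"
  have f0: "0 \<le> \<lfloor>t / Tp\<rfloor>" using assms by simp
  have m1: "real m \<le> t / Tp" using f0 by (simp add: m_def)
  have m2: "t / Tp < real m + 1" using f0 by (simp add: m_def)
  have "real m * Tp \<le> t" using m1 assms by (simp add: le_divide_eq)
  moreover have "t < (real m + 1) * Tp" using m2 assms by (simp add: divide_less_eq)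
  ultimately show ?thesis by (intro that[of "t - real m * Tp" m]) (auto simp: algebra_simps)
qed

locale setting =
  fixes f :: "real \<Rightarrow> 'a::euclidean_space \<Rightarrow> 'b::euclidean_space \<Rightarrow> 'a"
    and Tp :: real and B Be :: "'a set" and V :: "'a \<Rightarrow> real"
    and \<alpha>1 \<alpha>2 c :: real
    and u :: "'a \<Rightarrow> real \<Rightarrow> 'b" and \<phi> :: "'a \<Rightarrow> real \<Rightarrow> 'a"
    and \<mu> :: "real \<Rightarrow> 'a \<Rightarrow> 'b"
  assumes Tp: "Tp > 0"
    and f_lip: "loc_lipschitz_in_x UNIV (\<lambda>t z. f t (fst z) (snd z))"
    and f_pw: "\<And>x w. pw_continuous_nonneg (\<lambda>t. f t x w)"
    and f_per: "\<And>t x w. t \<ge> 0 \<Longrightarrow> f (t + Tp) x w = f t x w"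
    and f_eq: "\<And>t. t \<ge> 0 \<Longrightarrow> f t 0 0 = 0"
    and B_ball: "\<exists>r>0. B = ball 0 r"
    and V0: "V 0 = 0" and Vpos: "\<And>x. x \<in> B \<Longrightarrow> x \<noteq> 0 \<Longrightarrow> V x > 0"
    and V_lip: "loc_lipschitz_on B V"
    and \<alpha>: "0 < \<alpha>1" "\<alpha>1 \<le> \<alpha>2"
    and V_bounds: "\<And>x. x \<in> B \<Longrightarrow> \<alpha>1 * (x \<bullet> x) \<le> V x \<and> V x \<le> \<alpha>2 * (x \<bullet> x)"
    and c: "0 \<le> c" "c < 1"
    and u_cont: "\<And>\<xi>. \<xi> \<in> B \<Longrightarrow> continuous_on {0..Tp} (u \<xi>)"
    and \<phi>_sol: "\<And>\<xi> t. \<xi> \<in> B \<Longrightarrow> t \<in> {0..Tp} \<Longrightarrow>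
        ((\<lambda>\<tau>. f \<tau> (\<phi> \<xi> \<tau>) (u \<xi> \<tau>)) has_integral (\<phi> \<xi> t - \<xi>)) {0..t}"
    and \<phi>_end: "\<And>\<xi>. \<xi> \<in> B \<Longrightarrow> \<phi> \<xi> Tp \<in> B \<and> V (\<phi> \<xi> Tp) \<le> c * V \<xi>"
    and u0: "\<And>t. t \<in> {0..Tp} \<Longrightarrow> u 0 t = 0"
    and Be: "open Be" "B \<subseteq> Be"
    and \<mu>_pw: "\<And>x. x \<in> Be \<Longrightarrow> pw_continuous_nonneg (\<lambda>t. \<mu> t x)"
    and \<mu>_per: "\<And>t x. t \<ge> 0 \<Longrightarrow> x \<in> Be \<Longrightarrow> \<mu> (t + Tp) x = \<mu> t x"
    and \<mu>_lip: "loc_lipschitz_in_x Be \<mu>"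
    and \<mu>_\<phi>: "\<And>\<xi> t. \<xi> \<in> B \<Longrightarrow> t \<in> {0..<Tp} \<Longrightarrow> \<phi> \<xi> t \<in> Be \<and> \<mu> t (\<phi> \<xi> t) = u \<xi> t"
begin

definition F where "F t x = f t x (\<mu> t x)"

definition rB where "rB = (SOME r. r > 0 \<and> B = ball 0 r)"

lemma rB: "rB > 0" "B = ball 0 rB"
  using someI_ex[OF B_ball] unfolding rB_def by auto

lemma zero_B: "0 \<in> B" using rB by (metis centre_in_ball)

lemma cl_iff: "cl_solution f \<mu> Be x a b \<longleftrightarrow> (\<forall>t\<in>{a..b}. x t \<in> Be) \<and> isol F x a b"
  by (simp add: cl_solution_def isol_def F_def)

lemma phi_0: "\<xi> \<in> B \<Longrightarrow> \<phi> \<xi> 0 = \<xi>"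
  using \<phi>_sol[of \<xi> 0] Tp has_integral_unique[OF has_integral_refl(2)[of _ 0]] by fastforce

lemma phi_Be: "\<xi> \<in> B \<Longrightarrow> t \<in> {0..Tp} \<Longrightarrow> \<phi> \<xi> t \<in> Be"
  using \<mu>_\<phi>[of \<xi> t] \<phi>_end[of \<xi>] Be by (cases "t = Tp") auto

lemma phi_isol: "\<xi> \<in> B \<Longrightarrow> isol F (\<phi> \<xi>) 0 Tp"
  unfolding isol_def
proof
  fix t assume \<xi>: "\<xi> \<in> B" and t: "t \<in> {0..Tp}"
  show "((\<lambda>\<tau>. F \<tau> (\<phi> \<xi> \<tau>)) has_integral (\<phi> \<xi> t - \<phi> \<xi> 0)) {0..t}"
    unfolding phi_0[OF \<xi>]
  proof (rule has_integral_spike_finite[where S = "{Tp}", OF _ _ \<phi>_sol[OF \<xi> t]])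
    fix \<tau> assume "\<tau> \<in> {0..t} - {Tp}"
    then have "\<tau> \<in> {0..<Tp}" using t by auto
    then show "F \<tau> (\<phi> \<xi> \<tau>) = f \<tau> (\<phi> \<xi> \<tau>) (u \<xi> \<tau>)" using \<mu>_\<phi>[OF \<xi>] by (simp add: F_def)
  qed simp
qed

lemma cl_phi: "\<xi> \<in> B \<Longrightarrow> cl_solution f \<mu> Be (\<phi> \<xi>) 0 Tp"
  using phi_isol phi_Be by (simp add: cl_iff)

end

context setting
begin

lemma f_per_nat: "t \<ge> 0 \<Longrightarrow> f (t + real m * Tp) x w = f t x w"
  by (rule per_nat[where h = "\<lambda>t. f t x w"]) (use f_per Tp in auto)

lemma mu_per_nat: "t \<ge> 0 \<Longrightarrow> x \<in> Be \<Longrightarrow> \<mu> (t + real m * Tp) x = \<mu> t x"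
  by (rule per_nat[where h = "\<lambda>t. \<mu> t x"]) (use \<mu>_per Tp in auto)

lemma F_per_nat: "t \<ge> 0 \<Longrightarrow> x \<in> Be \<Longrightarrow> F (t + real m * Tp) x = F t x"
  by (simp add: F_def f_per_nat mu_per_nat)

lemma phi_zero: "t \<in> {0..Tp} \<Longrightarrow> \<phi> 0 t = 0"
proof -
  assume t: "t \<in> {0..Tp}"
  obtain r1 Lf where r1: "r1 > 0" and Lf: "\<And>s p q. s \<in> {0..Tp} \<Longrightarrow> p \<in> ball (0, 0) r1 \<inter> UNIV \<Longrightarrow> q \<in> ball (0, 0) r1 \<inter> UNIV
      \<Longrightarrow> norm (f s (fst p) (snd p) - f s (fst q) (snd q)) \<le> Lf * dist p q"
  proof -
    have "0 \<le> Tp" "(0, 0) \<in> (UNIV :: ('a \<times> 'b) set)" using Tp by auto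
    from f_lip[unfolded loc_lipschitz_in_x_def, rule_format, OF this] show ?thesis
      using that by blast
  qed
  define G where "G s x = f s x 0" for s x
  have lip: "norm (G s x - G s y) \<le> \<bar>Lf\<bar> * norm (x - y)" if "s \<in> {0..Tp}" "x \<in> cball 0 (r1/2)" "y \<in> cball 0 (r1/2)" for s x y
  proof -
    have "norm (G s x - G s y) \<le> Lf * dist (x, 0::'b) (y, 0)"
      using Lf[of s "(x, 0)" "(y, 0)"] that r1 by (auto simp: G_def dist_norm)
    also have "dist (x, 0::'b) (y, 0) = norm (x - y)" by (simp add: dist_Pair_Pair dist_norm)
    finally show ?thesis by (smt (verit, ccfv_SIG) mult_right_mono norm_ge_zero)
  qed
  have sol: "isol G (\<phi> 0) 0 Tp"
    unfolding isol_def
  proof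
    fix t assume t: "t \<in> {0..Tp}"
    show "((\<lambda>\<tau>. G \<tau> (\<phi> 0 \<tau>)) has_integral (\<phi> 0 t - \<phi> 0 0)) {0..t}"
      unfolding phi_0[OF zero_B]
    proof (rule has_integral_spike_finite[where S = "{}", OF _ _ \<phi>_sol[OF zero_B t]])
      fix \<tau> assume "\<tau> \<in> {0..t} - {}"
      then have "\<tau> \<in> {0..Tp}" using t by auto
      then show "G \<tau> (\<phi> 0 \<tau>) = f \<tau> (\<phi> 0 \<tau>) (u 0 \<tau>)" using u0 by (simp add: G_def)
    qed simp
  qed
  have "norm (\<phi> 0 t) \<le> norm (\<phi> 0 0) * exp (\<bar>Lf\<bar> * (t - 0))"
    by (rule isol_bound[where r = "r1/2" and L = "\<bar>Lf\<bar>", OF _ _ lip _ sol]) (use Tp t r1 f_eq phi_0[OF zero_B] in \<open>auto simp: G_def\<close>)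
  then show ?thesis using phi_0[OF zero_B] by simp
qed

lemma mu0: "t \<ge> 0 \<Longrightarrow> \<mu> t 0 = 0"
proof -
  assume t: "t \<ge> 0"
  obtain m s where ts: "t = s + real m * Tp" "0 \<le> s" "s < Tp" using decomp[OF t Tp] .
  have "\<mu> s 0 = 0"
    using \<mu>_\<phi>[OF zero_B, of s] phi_zero[of s] u0[of s] ts by auto
  then show ?thesis using ts mu_per_nat[of s 0 m] Be zero_B by auto
qed

lemma F0: "t \<ge> 0 \<Longrightarrow> F t 0 = 0"
  by (simp add: F_def mu0 f_eq)

lemma near0: "\<exists>\<rho> L. 0 < \<rho> \<and> 0 < L \<and> cball 0 \<rho> \<subseteq> B \<and>
   (\<forall>t\<ge>0. \<forall>x\<in>cball 0 \<rho>. \<forall>y\<in>cball 0 \<rho>. norm (F t x - F t y) \<le> L * norm (x - y))"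
proof -
  obtain r1 Lf where r1: "r1 > 0" and Lf: "\<And>s p q. s \<in> {0..Tp} \<Longrightarrow> p \<in> ball (0, 0) r1 \<inter> UNIV \<Longrightarrow> q \<in> ball (0, 0) r1 \<inter> UNIV
      \<Longrightarrow> norm (f s (fst p) (snd p) - f s (fst q) (snd q)) \<le> Lf * dist p q"
  proof -
    have "0 \<le> Tp" "(0, 0) \<in> (UNIV :: ('a \<times> 'b) set)" using Tp by auto
    from f_lip[unfolded loc_lipschitz_in_x_def, rule_format, OF this] show ?thesis
      using that by blast
  qed
  obtain r2 Lm where r2: "r2 > 0" and Lm: "\<And>s x y. s \<in> {0..Tp} \<Longrightarrow> x \<in> ball 0 r2 \<inter> Be \<Longrightarrow> y \<in> ball 0 r2 \<inter> Be
      \<Longrightarrow> norm (\<mu> s x - \<mu> s y) \<le> Lm * dist x y"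
  proof -
    have "0 \<le> Tp" "0 \<in> Be" using Tp zero_B Be by auto
    from \<mu>_lip[unfolded loc_lipschitz_in_x_def, rule_format, OF this] show ?thesis
      using that by blast
  qed
  define \<rho> where "\<rho> = min (rB / 2) (min (r2 / 2) (r1 / (2 * (1 + \<bar>Lm\<bar>))))"
  define L where "L = \<bar>Lf\<bar> * (1 + \<bar>Lm\<bar>) + 1"
  have \<rho>0: "0 < \<rho>" using rB r1 r2 by (auto simp: \<rho>_def)
  have L0: "0 < L"
  proof -
    have "0 \<le> \<bar>Lf\<bar> * (1 + \<bar>Lm\<bar>)" by simp
    then show ?thesis unfolding L_def by linarith
  qed
  have \<rho>1: "\<rho> \<le> rB / 2" "\<rho> \<le> r2 / 2" "\<rho> \<le> r1 / (2 * (1 + \<bar>Lm\<bar>))"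
    unfolding \<rho>_def by (rule min.cobounded1, rule order_trans[OF min.cobounded2 min.cobounded1],
        rule order_trans[OF min.cobounded2 min.cobounded2])
  have \<rho>B: "cball 0 \<rho> \<subseteq> B"
  proof
    fix x :: 'a assume "x \<in> cball 0 \<rho>"
    then have "norm x < rB" using \<rho>1 rB by simp
    then show "x \<in> B" by (subst rB(2)) simp
  qed
  have inBe: "x \<in> ball 0 r2 \<inter> Be" if "x \<in> cball 0 \<rho>" for x
  proof -
    have "norm x < r2" using that \<rho>1 r2 by simp
    then show ?thesis using that \<rho>B Be by auto
  qed
  have mub: "norm (\<mu> s x) \<le> \<bar>Lm\<bar> * norm x" if s: "s \<in> {0..Tp}" and x: "x \<in> cball 0 \<rho>" for s x
  proof -
    have "norm (\<mu> s x - \<mu> s 0) \<le> Lm * dist x 0" by (rule Lm[OF s inBe[OF x] inBe]) (use \<rho>0 in auto)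
    then have "norm (\<mu> s x) \<le> Lm * norm x" using mu0[of s] s by (simp add: dist_norm)
    also have "\<dots> \<le> \<bar>Lm\<bar> * norm x" by (intro mult_right_mono) auto
    finally show ?thesis .
  qed
  have pb: "(x, \<mu> s x) \<in> ball (0, 0) r1 \<inter> UNIV" if s: "s \<in> {0..Tp}" and x: "x \<in> cball 0 \<rho>" for s x
  proof -
    have "norm (x, \<mu> s x) \<le> norm x + norm (\<mu> s x)" by (rule norm_Pair_le)
    also have "\<dots> \<le> (1 + \<bar>Lm\<bar>) * norm x" using mub[OF s x] by (simp add: algebra_simps)
    also have "\<dots> \<le> (1 + \<bar>Lm\<bar>) * (r1 / (2 * (1 + \<bar>Lm\<bar>)))"
      using x \<rho>1 by (intro mult_left_mono) auto
    also have "\<dots> = r1 / 2"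
    proof -
      have "(1 + \<bar>Lm\<bar>) \<noteq> 0" by linarith
      then show ?thesis by (simp add: field_simps)
    qed
    also have "\<dots> < r1" using r1 by simp
    finally have "norm (x, \<mu> s x) < r1" .
    moreover have "dist (0, 0) (x, \<mu> s x) = norm (x, \<mu> s x)" by (metis dist_0_norm zero_prod_def)
    ultimately show ?thesis by simp
  qed
  have lip0: "norm (F s x - F s y) \<le> L * norm (x - y)" if s: "s \<in> {0..Tp}" and x: "x \<in> cball 0 \<rho>" and y: "y \<in> cball 0 \<rho>" for s x y
  proof -
    have "norm (F s x - F s y) \<le> Lf * dist (x, \<mu> s x) (y, \<mu> s y)"
      using Lf[OF s pb[OF s x] pb[OF s y]] by (simp add: F_def)
    also have "\<dots> \<le> \<bar>Lf\<bar> * dist (x, \<mu> s x) (y, \<mu> s y)" by (simp add: mult_right_mono)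
    also have "dist (x, \<mu> s x) (y, \<mu> s y) \<le> norm (x - y) + norm (\<mu> s x - \<mu> s y)"
      using norm_Pair_le[of "x - y" "\<mu> s x - \<mu> s y"] by (simp add: dist_norm)
    also have "norm (\<mu> s x - \<mu> s y) \<le> \<bar>Lm\<bar> * norm (x - y)"
    proof -
      have "norm (\<mu> s x - \<mu> s y) \<le> Lm * dist x y" by (rule Lm[OF s inBe[OF x] inBe[OF y]])
      also have "Lm * dist x y \<le> \<bar>Lm\<bar> * norm (x - y)" by (simp add: dist_norm mult_right_mono)
      finally show ?thesis .
    qed
    finally have "norm (F s x - F s y) \<le> \<bar>Lf\<bar> * (norm (x - y) + \<bar>Lm\<bar> * norm (x - y))"
      by (simp add: mult_left_mono)
    also have "\<dots> \<le> L * norm (x - y)" by (simp add: L_def algebra_simps)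
    finally show ?thesis .
  qed
  have "\<forall>t\<ge>0. \<forall>x\<in>cball 0 \<rho>. \<forall>y\<in>cball 0 \<rho>. norm (F t x - F t y) \<le> L * norm (x - y)"
  proof (intro allI impI ballI)
    fix t :: real and x y :: 'a assume t: "t \<ge> 0" and x: "x \<in> cball 0 \<rho>" and y: "y \<in> cball 0 \<rho>"
    obtain m s where ts: "t = s + real m * Tp" "0 \<le> s" "s < Tp" using decomp[OF t Tp] .
    have "F t x = F s x" "F t y = F s y" using ts F_per_nat inBe[OF x] inBe[OF y] by auto
    then show "norm (F t x - F t y) \<le> L * norm (x - y)" using lip0[OF _ x y, of s] ts by auto
  qed
  with \<rho>0 L0 \<rho>B show ?thesis by blast
qed

lemma int_F:
  assumes a: "0 \<le> a" and yc: "continuous_on {a..b} y" and yin: "\<And>\<tau>. \<tau> \<in> {a..b} \<Longrightarrow> y \<tau> \<in> D"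
    and DBe: "D \<subseteq> Be" and bnd: "\<And>\<tau> x. \<tau> \<ge> 0 \<Longrightarrow> x \<in> D \<Longrightarrow> norm (F \<tau> x) \<le> K"
  shows "(\<lambda>\<tau>. F \<tau> (y \<tau>)) integrable_on {a..b}"
proof -
  have wm: "(\<lambda>\<tau>. \<mu> \<tau> (y \<tau>)) measurable_on {a..b}"
  proof (rule cara_cont[where D = Be])
    show "\<And>x. x \<in> Be \<Longrightarrow> (\<lambda>t. \<mu> t x) measurable_on {a..b}" using \<mu>_pw a by (intro pw_meas)
    show "\<And>t. t \<in> {a..b} \<Longrightarrow> continuous_on Be (\<mu> t)" using \<mu>_lip a by (intro lip_cont) auto
  qed (use yc yin DBe in auto)
  have fm: "(\<lambda>\<tau>. f \<tau> (y \<tau>) (\<mu> \<tau> (y \<tau>))) measurable_on {a..b}"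
  proof (rule cara_meas[OF _ _ yc wm])
    show "\<And>x w. (\<lambda>t. f t x w) measurable_on {a..b}" using f_pw a by (intro pw_meas)
    show "\<And>t. t \<in> {a..b} \<Longrightarrow> continuous_on UNIV (\<lambda>p. f t (fst p) (snd p))"
      using lip_cont[OF f_lip] a by auto
  qed
  show ?thesis
  proof (rule measurable_bounded_by_integrable_imp_integrable)
    show "(\<lambda>\<tau>. F \<tau> (y \<tau>)) \<in> borel_measurable (lebesgue_on {a..b})"
      using measurable_on_imp_borel_measurable_lebesgue[OF fm] by (simp add: F_def)
    show "(\<lambda>\<tau>. K) integrable_on {a..b}" by (rule integrable_const_ivl)
    show "\<And>\<tau>. \<tau> \<in> {a..b} \<Longrightarrow> norm (F \<tau> (y \<tau>)) \<le> K" using bnd yin a by auto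
  qed simp
qed

end

context setting
begin

definition nearH where "nearH \<rho> L \<longleftrightarrow> 0 < \<rho> \<and> 0 < L \<and> cball 0 \<rho> \<subseteq> B \<and>
   (\<forall>t\<ge>0. \<forall>x\<in>cball 0 \<rho>. \<forall>y\<in>cball 0 \<rho>. norm (F t x - F t y) \<le> L * norm (x - y))"

lemma nearH_ex: "\<exists>\<rho> L. nearH \<rho> L"
  using near0 unfolding nearH_def .

lemma bound1:
  assumes H: "nearH \<rho> L" and a: "0 \<le> a" "a \<le> b" and sol: "isol F z a b"
    and small: "norm (z a) * exp (L * (b - a)) < \<rho>" and t: "t \<in> {a..b}"
  shows "norm (z t) \<le> norm (z a) * exp (L * (t - a)) \<and> z t \<in> cball 0 \<rho>"
proof -
  have lip: "norm (F \<tau> x - F \<tau> y) \<le> L * norm (x - y)" if "\<tau> \<in> {a..b}" "x \<in> cball 0 \<rho>" "y \<in> cball 0 \<rho>" for \<tau> x y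
    using H that a unfolding nearH_def by auto
  have L: "0 \<le> L" using H by (simp add: nearH_def)
  have 1: "norm (z t) \<le> norm (z a) * exp (L * (t - a))"
    by (rule isol_bound[where r = \<rho> and L = L, OF a(2) L lip _ sol small t]) (use F0 a in auto)
  have "norm (z a) * exp (L * (t - a)) \<le> norm (z a) * exp (L * (b - a))"
    using t L by (intro mult_left_mono) (auto intro!: mult_left_mono)
  with 1 small have "norm (z t) \<le> \<rho>" by linarith
  with 1 show ?thesis by simp
qed

lemma per_step:
  assumes H: "nearH \<rho> L" and \<xi>: "norm \<xi> * exp (L * Tp) < \<rho>"
    and sol: "isol F z cs (cs + Tp)" and cm: "cs = real m * Tp" and zc: "z cs = \<xi>"
    and zBe: "\<And>t. t \<in> {cs..cs + Tp} \<Longrightarrow> z t \<in> Be"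
  shows "z (cs + Tp) = \<phi> \<xi> Tp"
proof -
  have \<rho>B: "cball 0 \<rho> \<subseteq> B" using H by (simp add: nearH_def)
  have L: "0 \<le> L" using H by (simp add: nearH_def)
  have "norm \<xi> \<le> norm \<xi> * exp (L * Tp)" using L Tp by (simp add: mult_le_cancel_left1)
  with \<xi> have \<xi>B: "\<xi> \<in> B" using \<rho>B by auto
  have ys: "isol F (\<lambda>s. z (s + cs)) (cs - cs) (cs + Tp - cs)"
  proof (rule isol_shift[OF sol])
    fix s assume s: "s \<in> {cs - cs..cs + Tp - cs}"
    then have "z (s + cs) \<in> Be" by (intro zBe) auto
    then show "F (s + cs) (z (s + cs)) = F s (z (s + cs))" using s F_per_nat[of s "z (s + cs)" m] cm by auto
  qed
  then have ys': "isol F (\<lambda>s. z (s + cs)) 0 Tp" by simp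
  have ps: "isol F (\<phi> \<xi>) 0 Tp" by (rule phi_isol[OF \<xi>B])
  have b1: "(\<lambda>s. z (s + cs)) s \<in> cball 0 \<rho>" if "s \<in> {0..Tp}" for s
    using bound1[OF H _ _ ys' _ that] Tp zc \<xi> by auto
  have b2: "\<phi> \<xi> s \<in> cball 0 \<rho>" if "s \<in> {0..Tp}" for s
    using bound1[OF H _ _ ps _ that] Tp phi_0[OF \<xi>B] \<xi> by auto
  have lip: "norm (F \<tau> x - F \<tau> y) \<le> L * norm (x - y)" if "\<tau> \<in> {0..Tp}" "x \<in> cball 0 \<rho>" "y \<in> cball 0 \<rho>" for \<tau> x y
    using H that unfolding nearH_def by auto
  have "(\<lambda>s. z (s + cs)) Tp = \<phi> \<xi> Tp"
    by (rule isol_uniq[where r = \<rho>, OF _ L lip ys' ps _ b1 b2]) (use Tp zc phi_0[OF \<xi>B] in auto)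
  then show ?thesis by (simp add: add.commute)
qed

end

context setting
begin

lemma T1_facts:
  assumes "0 \<le> t0"
  defines "m1 \<equiv> nat \<lceil>t0 / Tp\<rceil>"
  shows "t0 \<le> real m1 * Tp" "real m1 * Tp < t0 + Tp"
proof -
  have "0 \<le> t0 / Tp" using assms Tp by simp
  then have c0: "0 \<le> \<lceil>t0 / Tp\<rceil>" by linarith
  have e: "real m1 = of_int \<lceil>t0 / Tp\<rceil>" using c0 by (simp add: m1_def)
  have "t0 / Tp \<le> real m1" unfolding e by (rule le_of_int_ceiling)
  then show "t0 \<le> real m1 * Tp" using Tp by (simp add: divide_le_eq)
  have "real m1 < t0 / Tp + 1" unfolding e
  proof (rule ccontr)
    assume "\<not> of_int \<lceil>t0 / Tp\<rceil> < t0 / Tp + 1"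
    then have "t0 / Tp \<le> of_int (\<lceil>t0 / Tp\<rceil> - 1)" by simp
    then have "\<lceil>t0 / Tp\<rceil> \<le> \<lceil>t0 / Tp\<rceil> - 1" by (rule ceiling_le)
    then show False by simp
  qed
  then show "real m1 * Tp < t0 + Tp" using Tp by (simp add: field_simps)
qed

lemma cst_facts:
  assumes H: "nearH \<rho> L"
  defines "\<theta> \<equiv> exp (L * Tp)" and "\<kappa> \<equiv> sqrt (\<alpha>2 / \<alpha>1)" and "c' \<equiv> max c (1/2)"
  defines "lam \<equiv> - ln c' / (2 * Tp)"
  shows "1 \<le> \<theta>" "1 \<le> \<kappa>" "0 < c'" "c' < 1" "c \<le> c'" "0 < lam" "\<kappa>\<^sup>2 = \<alpha>2 / \<alpha>1"
    "\<And>j::nat. c' ^ j = (exp (- lam * real j * Tp))\<^sup>2"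
proof -
  have L: "0 < L" using H by (simp add: nearH_def)
  show "1 \<le> \<theta>" using L Tp by (simp add: \<theta>_def)
  show "1 \<le> \<kappa>" using \<alpha> by (simp add: \<kappa>_def)
  show "0 < c'" "c' < 1" "c \<le> c'" using c by (auto simp: c'_def)
  then have "ln c' < 0" by simp
  then show "0 < lam" using Tp by (simp add: lam_def divide_neg_pos)
  show "\<kappa>\<^sup>2 = \<alpha>2 / \<alpha>1" using \<alpha> by (simp add: \<kappa>_def)
  fix j :: nat
  have "(exp (- lam * real j * Tp))\<^sup>2 = exp (real j * (- 2 * lam * Tp))"
  proof -
    have "(exp (- lam * real j * Tp))\<^sup>2 = exp (- lam * real j * Tp) * exp (- lam * real j * Tp)"
      by (rule power2_eq_square)
    also have "\<dots> = exp (- lam * real j * Tp + - lam * real j * Tp)" by (rule exp_add[symmetric])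
    also have "- lam * real j * Tp + - lam * real j * Tp = real j * (- 2 * lam * Tp)" by (simp add: algebra_simps)
    finally show ?thesis .
  qed
  also have "- 2 * lam * Tp = ln c'" using Tp by (simp add: lam_def)
  also have "exp (real j * ln c') = exp (ln c') ^ j" by (rule exp_of_nat_mult)
  also have "\<dots> = c' ^ j" using \<open>0 < c'\<close> by simp
  finally show "c' ^ j = (exp (- lam * real j * Tp))\<^sup>2" by simp
qed

end

context setting
begin

lemma V_nonneg: "x \<in> B \<Longrightarrow> 0 \<le> V x"
  using V_bounds[of x] \<alpha> by (meson inner_ge_zero mult_nonneg_nonneg less_imp_le order_trans)

lemma estimate:
  assumes H: "nearH \<rho> L"
  defines "\<theta> \<equiv> exp (L * Tp)" and "\<kappa> \<equiv> sqrt (\<alpha>2 / \<alpha>1)" and "c' \<equiv> max c (1/2)"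
  defines "lam \<equiv> - ln c' / (2 * Tp)"
  defines "\<delta> \<equiv> \<rho> / (2 * \<kappa> * \<theta> * \<theta>)" and "K \<equiv> \<kappa> * \<theta> * \<theta> * exp (2 * lam * Tp)"
  assumes t0: "0 \<le> t0" and sol: "cl_solution f \<mu> Be x t0 t1" and sm: "norm (x t0) < \<delta>"
    and t: "t \<in> {t0..t1}"
  shows "norm (x t) \<le> K * norm (x t0) * exp (- lam * (t - t0))"
proof -
  have \<theta>1: "1 \<le> \<theta>" using cst_facts(1)[OF H] unfolding \<theta>_def .
  have \<kappa>1: "1 \<le> \<kappa>" using cst_facts(2)[OF H] unfolding \<kappa>_def .
  have c'0: "0 < c'" "c' < 1" "c \<le> c'" using cst_facts(3-5)[OF H] unfolding c'_def by auto
  have lam0: "0 < lam" using cst_facts(6)[OF H] unfolding lam_def c'_def .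
  have \<kappa>2: "\<kappa>\<^sup>2 = \<alpha>2 / \<alpha>1" using cst_facts(7)[OF H] unfolding \<kappa>_def .
  have cpow: "c' ^ j = (exp (- lam * real j * Tp))\<^sup>2" for j :: nat
    using cst_facts(8)[OF H, of j] unfolding lam_def c'_def .
  have \<rho>0: "0 < \<rho>" and L0: "0 < L" and \<rho>B: "cball 0 \<rho> \<subseteq> B" using H by (auto simp: nearH_def)
  have xs: "isol F x t0 t1" and xBe: "\<And>\<tau>. \<tau> \<in> {t0..t1} \<Longrightarrow> x \<tau> \<in> Be" using sol by (auto simp: cl_iff)
  have kt: "0 < \<kappa> * \<theta>" using \<kappa>1 \<theta>1 by simp
  have kt1: "1 \<le> \<kappa> * \<theta>" using \<kappa>1 \<theta>1 by (metis mult_mono' order_trans mult_1_right zero_le_one)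
  have \<delta>0: "0 < \<delta>" using \<rho>0 kt \<theta>1 by (simp add: \<delta>_def)
  have kttd: "\<kappa> * \<theta> * \<theta> * \<delta> = \<rho> / 2" using \<kappa>1 \<theta>1 by (simp add: \<delta>_def field_simps)
  have td: "\<theta> * \<delta> \<le> \<rho> / 2"
  proof -
    have "0 \<le> \<theta> * \<delta>" using \<theta>1 \<delta>0 by simp
    then have "1 * (\<theta> * \<delta>) \<le> \<kappa> * \<theta> * (\<theta> * \<delta>)" by (rule mult_right_mono[OF kt1])
    then have "\<theta> * \<delta> \<le> \<kappa> * \<theta> * (\<theta> * \<delta>)" by simp
    also have "\<dots> = \<rho> / 2" using kttd by (simp add: algebra_simps)
    finally show ?thesis .
  qed
  have expTp: "exp (L * s) \<le> \<theta>" if "s \<le> Tp" for s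
    using that L0 by (simp add: \<theta>_def)
  define m1 where "m1 = nat \<lceil>t0 / Tp\<rceil>"
  define T1 where "T1 = real m1 * Tp"
  have T1: "t0 \<le> T1" "T1 < t0 + Tp" using T1_facts[OF t0] by (auto simp: T1_def m1_def)
  have t01: "t0 \<le> t1" using t by auto
  have nx0: "0 \<le> norm (x t0)" by simp
  have Ka: "norm (x \<tau>) \<le> norm (x t0) * \<theta> \<and> x \<tau> \<in> cball 0 \<rho>" if \<tau>: "\<tau> \<in> {t0..min t1 T1}" for \<tau>
  proof -
    define b where "b = min t1 T1"
    have b: "t0 \<le> b" "b \<le> t1" "b - t0 \<le> Tp" using T1 t01 by (auto simp: b_def)
    have sb: "isol F x t0 b" by (rule isol_sub[OF xs]) (use b in auto)
    have "norm (x t0) * exp (L * (b - t0)) \<le> norm (x t0) * \<theta>"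
      by (intro mult_left_mono expTp) (use b in auto)
    also have "\<dots> \<le> \<delta> * \<theta>" using sm \<theta>1 by (intro mult_right_mono) auto
    also have "\<dots> < \<rho>" using td \<rho>0 by (simp add: mult.commute)
    finally have small: "norm (x t0) * exp (L * (b - t0)) < \<rho>" .
    have "norm (x \<tau>) \<le> norm (x t0) * exp (L * (\<tau> - t0)) \<and> x \<tau> \<in> cball 0 \<rho>"
      by (rule bound1[OF H t0 b(1) sb small]) (use \<tau> in \<open>auto simp: b_def\<close>)
    moreover have "norm (x t0) * exp (L * (\<tau> - t0)) \<le> norm (x t0) * \<theta>"
      by (intro mult_left_mono expTp) (use \<tau> T1 in auto)
    ultimately show ?thesis by auto
  qed
  show ?thesis
  proof (cases "t \<le> T1")
    case True
    have "norm (x t) \<le> norm (x t0) * \<theta>" using Ka[of t] t True by auto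
    also have "\<dots> \<le> norm (x t0) * (K * exp (- lam * (t - t0)))"
    proof (intro mult_left_mono nx0)
      have "exp (- lam * Tp) \<le> exp (- lam * (t - t0))" using True T1 lam0 by (auto intro!: mult_left_mono)
      then have "\<kappa> * \<theta> * \<theta> * exp (2 * lam * Tp) * exp (- lam * Tp) \<le> K * exp (- lam * (t - t0))"
        unfolding K_def using kt \<theta>1 by (intro mult_left_mono) auto
      moreover have "\<kappa> * \<theta> * \<theta> * exp (2 * lam * Tp) * exp (- lam * Tp) = \<kappa> * \<theta> * \<theta> * exp (lam * Tp)"
        by (simp add: mult.assoc exp_add[symmetric])
      moreover have "\<theta> \<le> \<kappa> * \<theta> * \<theta> * exp (lam * Tp)"
      proof -
        have "1 \<le> \<kappa> * \<theta> * exp (lam * Tp)" using kt1 lam0 Tp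
          by (metis mult_mono' order_trans mult_1_right zero_le_one one_le_exp_iff less_imp_le mult_pos_pos le_numeral_extra(1) kt less_imp_le)
        then have "\<theta> * 1 \<le> \<theta> * (\<kappa> * \<theta> * exp (lam * Tp))" using \<theta>1 by (intro mult_left_mono) auto
        then show ?thesis by (simp add: algebra_simps)
      qed
      ultimately show "\<theta> \<le> K * exp (- lam * (t - t0))" by linarith
    qed
    finally show ?thesis by (simp add: algebra_simps)
  next
    case False
    define \<xi>0 where "\<xi>0 = x T1"
    have KT1: "norm \<xi>0 \<le> norm (x t0) * \<theta>" "\<xi>0 \<in> cball 0 \<rho>" using Ka[of T1] T1 t False by (auto simp: \<xi>0_def)
    have \<xi>0B: "\<xi>0 \<in> B" using KT1 \<rho>B by auto
    have normV: "norm y \<le> \<kappa> * exp (- lam * real j * Tp) * norm \<xi>0"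
      if yB: "y \<in> B" and Vy: "V y \<le> c' ^ j * V \<xi>0" for y j
    proof (rule power2_le_imp_le)
      have "\<alpha>1 * (norm y)\<^sup>2 \<le> V y" using V_bounds[OF yB] by (simp add: power2_norm_eq_inner)
      also have "\<dots> \<le> c' ^ j * V \<xi>0" by (rule Vy)
      also have "\<dots> \<le> c' ^ j * (\<alpha>2 * (norm \<xi>0)\<^sup>2)"
        using V_bounds[OF \<xi>0B] c'0 by (intro mult_left_mono) (auto simp: power2_norm_eq_inner)
      finally have "\<alpha>1 * (norm y)\<^sup>2 \<le> c' ^ j * (\<alpha>2 * (norm \<xi>0)\<^sup>2)" .
      then have "(norm y)\<^sup>2 \<le> c' ^ j * (\<alpha>2 / \<alpha>1) * (norm \<xi>0)\<^sup>2"
        using \<alpha> by (simp add: field_simps)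
      also have "\<dots> = (\<kappa> * exp (- lam * real j * Tp) * norm \<xi>0)\<^sup>2"
        unfolding cpow \<kappa>2[symmetric] by (simp add: power_mult_distrib)
      finally show "(norm y)\<^sup>2 \<le> (\<kappa> * exp (- lam * real j * Tp) * norm \<xi>0)\<^sup>2" .
      show "0 \<le> \<kappa> * exp (- lam * real j * Tp) * norm \<xi>0" using \<kappa>1 by simp
    qed
    have small_j: "norm y * \<theta> < \<rho>" if yB: "y \<in> B" and Vy: "V y \<le> c' ^ j * V \<xi>0" for y j
    proof -
      have "norm y \<le> \<kappa> * exp (- lam * real j * Tp) * norm \<xi>0" by (rule normV[OF yB Vy])
      also have "\<dots> \<le> \<kappa> * 1 * norm \<xi>0"
        using \<kappa>1 lam0 Tp by (intro mult_right_mono mult_left_mono) auto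
      also have "\<dots> \<le> \<kappa> * (norm (x t0) * \<theta>)" using KT1 \<kappa>1 by simp
      also have "\<dots> < \<kappa> * (\<delta> * \<theta>)" using sm \<kappa>1 \<theta>1 by (intro mult_strict_left_mono mult_strict_right_mono) auto
      finally have "norm y * \<theta> < \<kappa> * (\<delta> * \<theta>) * \<theta>" using \<theta>1 by (intro mult_strict_right_mono) auto
      also have "\<kappa> * (\<delta> * \<theta>) * \<theta> = \<rho> / 2" using kttd by (simp add: algebra_simps)
      finally show ?thesis using \<rho>0 by linarith
    qed
    have claim: "T1 + real j * Tp \<le> t1 \<longrightarrow> x (T1 + real j * Tp) \<in> B \<and> V (x (T1 + real j * Tp)) \<le> c' ^ j * V \<xi>0" for j
    proof (induction j)
      case 0 show ?case using \<xi>0B by (simp add: \<xi>0_def)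
    next
      case (Suc j)
      show ?case
      proof
        assume le: "T1 + real (Suc j) * Tp \<le> t1"
        define cc where "cc = T1 + real j * Tp"
        have le': "cc + Tp \<le> t1" using le by (simp add: cc_def algebra_simps)
        then have IH: "x cc \<in> B" "V (x cc) \<le> c' ^ j * V \<xi>0" using Suc Tp by (auto simp: cc_def)
        have ccm: "cc = real (m1 + j) * Tp" by (simp add: cc_def T1_def algebra_simps)
        have cc0: "t0 \<le> cc"
        proof -
          have "0 \<le> real j * Tp" using Tp by simp
          then show ?thesis using T1 unfolding cc_def by linarith
        qed
        have "x (cc + Tp) = \<phi> (x cc) Tp"
        proof (rule per_step[where z = x, OF H small_j[OF IH, unfolded \<theta>_def] _ ccm refl])
          show "isol F x cc (cc + Tp)" by (rule isol_sub[OF xs]) (use cc0 le' Tp in auto)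
          show "\<And>t. t \<in> {cc..cc + Tp} \<Longrightarrow> x t \<in> Be" using xBe cc0 le' by auto
        qed
        moreover have "cc + Tp = T1 + real (Suc j) * Tp" by (simp add: cc_def algebra_simps)
        ultimately have e: "x (T1 + real (Suc j) * Tp) = \<phi> (x cc) Tp" by simp
        have "V (\<phi> (x cc) Tp) \<le> c * V (x cc)" using \<phi>_end[OF IH(1)] by simp
        also have "\<dots> \<le> c' * V (x cc)" using c'0 V_nonneg[OF IH(1)] by (intro mult_right_mono) auto
        also have "\<dots> \<le> c' * (c' ^ j * V \<xi>0)" using IH(2) c'0 by (intro mult_left_mono) auto
        finally show "x (T1 + real (Suc j) * Tp) \<in> B \<and> V (x (T1 + real (Suc j) * Tp)) \<le> c' ^ Suc j * V \<xi>0"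
          using e \<phi>_end[OF IH(1)] by simp
      qed
    qed
    have tT: "0 \<le> t - T1" using False by simp
    obtain j s where js: "t - T1 = s + real j * Tp" "0 \<le> s" "s < Tp" using decomp[OF tT Tp] .
    define cc where "cc = T1 + real j * Tp"
    have cct: "cc \<le> t" "t < cc + Tp" using js by (auto simp: cc_def)
    have cl: "cc \<le> t1" using cct t by auto
    have cB: "x cc \<in> B" "V (x cc) \<le> c' ^ j * V \<xi>0" using claim[of j] cl by (auto simp: cc_def)
    have cc0: "t0 \<le> cc"
        proof -
          have "0 \<le> real j * Tp" using Tp by simp
          then show ?thesis using T1 unfolding cc_def by linarith
        qed
    define b where "b = min t1 (cc + Tp)"
    have b: "cc \<le> b" "b \<le> t1" "b - cc \<le> Tp" using cl Tp by (auto simp: b_def)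
    have sb: "isol F x cc b" by (rule isol_sub[OF xs]) (use b cc0 in auto)
    have "norm (x cc) * exp (L * (b - cc)) \<le> norm (x cc) * \<theta>" by (intro mult_left_mono expTp) (use b in auto)
    also have "\<dots> < \<rho>" using small_j[OF cB] by (simp add: mult.commute)
    finally have smallc: "norm (x cc) * exp (L * (b - cc)) < \<rho>" .
    have "norm (x t) \<le> norm (x cc) * exp (L * (t - cc))"
      using bound1[OF H _ b(1) sb smallc, of t] cc0 t0 cct t by (auto simp: b_def)
    also have "\<dots> \<le> norm (x cc) * \<theta>" by (intro mult_left_mono expTp) (use cct in auto)
    also have "\<dots> \<le> (\<kappa> * exp (- lam * real j * Tp) * norm \<xi>0) * \<theta>"
      using normV[OF cB] \<theta>1 by (intro mult_right_mono) auto
    also have "\<dots> \<le> (\<kappa> * exp (- lam * real j * Tp) * (norm (x t0) * \<theta>)) * \<theta>"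
      using KT1 \<kappa>1 \<theta>1 by (intro mult_right_mono mult_left_mono) auto
    also have "\<dots> \<le> (\<kappa> * (exp (- lam * (t - t0)) * exp (2 * lam * Tp)) * (norm (x t0) * \<theta>)) * \<theta>"
    proof -
      have "t - t0 \<le> real j * Tp + 2 * Tp" using js T1 by (simp add: algebra_simps)
      then have "lam * (t - t0) \<le> lam * (real j * Tp + 2 * Tp)" using lam0 by (intro mult_left_mono) auto
      then have "- lam * real j * Tp \<le> - lam * (t - t0) + 2 * lam * Tp" by (simp add: algebra_simps)
      then have "exp (- lam * real j * Tp) \<le> exp (- lam * (t - t0)) * exp (2 * lam * Tp)"
        by (simp add: exp_add[symmetric])
      then show ?thesis using \<kappa>1 \<theta>1 by (intro mult_right_mono mult_left_mono) auto
    qed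
    also have "\<dots> = K * norm (x t0) * exp (- lam * (t - t0))" by (simp add: K_def algebra_simps)
    finally show ?thesis .
  qed
qed

end

lemma nat_floor_eqI: "real k \<le> y \<Longrightarrow> y < real k + 1 \<Longrightarrow> nat \<lfloor>y\<rfloor> = k"
proof -
  assume "real k \<le> y" "y < real k + 1"
  then have "\<lfloor>y\<rfloor> = int k" by (intro floor_unique) auto
  then show ?thesis by simp
qed

context setting
begin

lemma existence:
  assumes H: "nearH \<rho> L" and t0: "0 \<le> t0" and x0: "norm x0 * exp (L * Tp) \<le> \<rho>"
  shows "\<exists>x. x t0 = x0 \<and> (\<forall>t1\<ge>t0. cl_solution f \<mu> Be x t0 t1)"
proof -
  have \<rho>0: "0 < \<rho>" and L0: "0 < L" and \<rho>B: "cball 0 \<rho> \<subseteq> B" using H by (auto simp: nearH_def)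
  have \<rho>Be: "cball 0 \<rho> \<subseteq> Be" using \<rho>B Be by auto
  have lipall: "norm (F \<tau> x - F \<tau> y) \<le> L * norm (x - y)" if "0 \<le> \<tau>" "x \<in> cball 0 \<rho>" "y \<in> cball 0 \<rho>" for \<tau> x y
    using H that unfolding nearH_def by auto
  define m1 where "m1 = nat \<lceil>t0 / Tp\<rceil>"
  define T1 where "T1 = real m1 * Tp"
  have T1: "t0 \<le> T1" "T1 < t0 + Tp" using T1_facts[OF t0] by (auto simp: T1_def m1_def)
  have "\<exists>z. z t0 = x0 \<and> isol F z t0 T1 \<and> (\<forall>t\<in>{t0..T1}. norm (z t) \<le> norm x0 * exp (L * (t - t0)))"
  proof (rule isol_exist[where r = \<rho>])
    show "t0 \<le> T1" "0 \<le> L" using T1 L0 by auto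
    show "\<And>\<tau> x y. \<tau> \<in> {t0..T1} \<Longrightarrow> x \<in> cball 0 \<rho> \<Longrightarrow> y \<in> cball 0 \<rho> \<Longrightarrow> norm (F \<tau> x - F \<tau> y) \<le> L * norm (x - y)"
      using lipall t0 by auto
    show "\<And>\<tau>. \<tau> \<in> {t0..T1} \<Longrightarrow> F \<tau> 0 = 0" using F0 t0 by auto
    show "(\<lambda>\<tau>. F \<tau> (y \<tau>)) integrable_on {t0..T1}"
      if "continuous_on {t0..T1} y" "\<And>\<tau>. \<tau> \<in> {t0..T1} \<Longrightarrow> y \<tau> \<in> cball 0 \<rho>" for y
    proof (rule int_F[OF t0 that \<rho>Be])
      fix \<tau> :: real and x :: 'a assume "0 \<le> \<tau>" "x \<in> cball 0 \<rho>"
      then have "norm (F \<tau> x - F \<tau> 0) \<le> L * norm (x - 0)" using \<rho>0 by (intro lipall) auto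
      also have "\<dots> \<le> L * \<rho>" using \<open>x \<in> cball 0 \<rho>\<close> L0 by (intro mult_left_mono) auto
      finally show "norm (F \<tau> x) \<le> L * \<rho>" using F0[OF \<open>0 \<le> \<tau>\<close>] by simp
    qed
    have "norm x0 * exp (L * (T1 - t0)) \<le> norm x0 * exp (L * Tp)"
      using T1 L0 by (intro mult_left_mono) auto
    then show "norm x0 * exp (L * (T1 - t0)) \<le> \<rho>" using x0 by linarith
  qed
  then obtain \<psi> where \<psi>0: "\<psi> t0 = x0" and \<psi>s: "isol F \<psi> t0 T1"
    and \<psi>b: "\<And>t. t \<in> {t0..T1} \<Longrightarrow> norm (\<psi> t) \<le> norm x0 * exp (L * (t - t0))" by blast
  have \<psi>in: "\<psi> t \<in> cball 0 \<rho>" if "t \<in> {t0..T1}" for t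
  proof -
    have "norm x0 * exp (L * (t - t0)) \<le> norm x0 * exp (L * Tp)"
      using that T1 L0 by (intro mult_left_mono) auto
    then show ?thesis using \<psi>b[OF that] x0 by simp
  qed
  define \<Xi> where "\<Xi> = rec_nat (\<psi> T1) (\<lambda>j \<xi>. \<phi> \<xi> Tp)"
  have \<Xi>0: "\<Xi> 0 = \<psi> T1" and \<Xi>S: "\<Xi> (Suc j) = \<phi> (\<Xi> j) Tp" for j by (simp_all add: \<Xi>_def)
  have \<Xi>B: "\<Xi> j \<in> B" for j
  proof (induction j)
    case 0 show ?case using \<psi>in[of T1] T1 \<rho>B by (auto simp: \<Xi>0)
  next
    case (Suc j) show ?case using \<phi>_end[OF Suc] by (simp add: \<Xi>S)
  qed
  define x where "x t = (if t \<le> T1 then \<psi> t else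
      \<phi> (\<Xi> (nat \<lfloor>(t - T1) / Tp\<rfloor>)) (t - (T1 + real (nat \<lfloor>(t - T1) / Tp\<rfloor>) * Tp)))" for t
  have xper: "x t = \<phi> (\<Xi> n) (t - (T1 + real n * Tp))" if t: "t \<in> {T1 + real n * Tp..T1 + real n * Tp + Tp}" for t n
  proof (cases "t \<le> T1")
    case True
    have "0 \<le> real n * Tp" using Tp by simp
    moreover have "T1 + real n * Tp \<le> t" using t by simp
    ultimately have "real n * Tp = 0" "t = T1" using True by linarith+
    then have "n = 0" using Tp by simp
    then show ?thesis using True \<open>t = T1\<close> phi_0[OF \<Xi>B[of 0]] by (simp add: x_def \<Xi>0)
  next
    case False
    show ?thesis
    proof (cases "t < T1 + real n * Tp + Tp")
      case True
      have "real n \<le> (t - T1) / Tp" using t Tp by (simp add: le_divide_eq)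
      moreover have "(t - T1) / Tp < real n + 1" using True Tp by (simp add: divide_less_eq algebra_simps)
      ultimately have "nat \<lfloor>(t - T1) / Tp\<rfloor> = n" by (rule nat_floor_eqI)
      then show ?thesis using False by (simp add: x_def)
    next
      case False2: False
      then have tt: "t = T1 + real n * Tp + Tp" using t by auto
      have "(t - T1) / Tp = real (Suc n)" using Tp tt by (simp add: field_simps)
      then have fl: "nat \<lfloor>(t - T1) / Tp\<rfloor> = Suc n" by simp
      have "x t = \<phi> (\<Xi> (Suc n)) (t - (T1 + real (Suc n) * Tp))" using False fl by (simp add: x_def)
      also have "t - (T1 + real (Suc n) * Tp) = 0" using tt by (simp add: algebra_simps)
      also have "\<phi> (\<Xi> (Suc n)) 0 = \<phi> (\<Xi> n) Tp" using phi_0[OF \<Xi>B[of "Suc n"]] by (simp add: \<Xi>S)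
      also have "Tp = t - (T1 + real n * Tp)" using tt by simp
      finally show ?thesis .
    qed
  qed
  have sols: "(\<forall>t\<in>{t0..T1 + real n * Tp}. x t \<in> Be) \<and> isol F x t0 (T1 + real n * Tp)" for n
  proof (induction n)
    case 0
    have "isol F x t0 T1" by (rule isol_cong[OF \<psi>s]) (simp add: x_def)
    moreover have "\<forall>t\<in>{t0..T1}. x t \<in> Be" using \<psi>in \<rho>Be by (auto simp: x_def)
    ultimately show ?case by simp
  next
    case (Suc n)
    define cc where "cc = T1 + real n * Tp"
    have cc0: "t0 \<le> cc"
    proof -
      have "0 \<le> real n * Tp" using Tp by simp
      then show ?thesis using T1 unfolding cc_def by linarith
    qed
    have ccm: "cc = real (m1 + n) * Tp" by (simp add: cc_def T1_def algebra_simps)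
    have sh: "isol F (\<lambda>s. \<phi> (\<Xi> n) (s + - cc)) (0 - - cc) (Tp - - cc)"
    proof (rule isol_shift[OF phi_isol[OF \<Xi>B]])
      fix s assume s: "s \<in> {0 - - cc..Tp - - cc}"
      then have s': "s - cc \<in> {0..Tp}" by auto
      have "F ((s - cc) + real (m1 + n) * Tp) (\<phi> (\<Xi> n) (s - cc)) = F (s - cc) (\<phi> (\<Xi> n) (s - cc))"
        by (rule F_per_nat) (use s' phi_Be[OF \<Xi>B s'] in auto)
      moreover have "(s - cc) + real (m1 + n) * Tp = s" using ccm by simp
      ultimately show "F (s + - cc) (\<phi> (\<Xi> n) (s + - cc)) = F s (\<phi> (\<Xi> n) (s + - cc))" by simp
    qed
    have sh2: "isol F x cc (cc + Tp)"
    proof (rule isol_cong)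
      show "isol F (\<lambda>s. \<phi> (\<Xi> n) (s + - cc)) cc (cc + Tp)" using sh by (simp add: add.commute)
      fix t assume "t \<in> {cc..cc + Tp}"
      then have "x t = \<phi> (\<Xi> n) (t - cc)" using xper[of t n] by (simp add: cc_def)
      then show "x t = \<phi> (\<Xi> n) (t + - cc)" by simp
    qed
    have be2: "\<forall>t\<in>{cc..cc + Tp}. x t \<in> Be"
    proof
      fix t assume t: "t \<in> {cc..cc + Tp}"
      then have "x t = \<phi> (\<Xi> n) (t - cc)" using xper[of t n] by (simp add: cc_def)
      moreover have "t - cc \<in> {0..Tp}" using t by auto
      ultimately show "x t \<in> Be" using phi_Be[OF \<Xi>B] by simp
    qed
    have e: "T1 + real (Suc n) * Tp = cc + Tp" by (simp add: cc_def algebra_simps)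
    have "isol F x t0 (cc + Tp)" using isol_concat[OF _ sh2 cc0] Suc.IH by (simp add: cc_def)
    moreover have "\<forall>t\<in>{t0..cc + Tp}. x t \<in> Be"
    proof
      fix t assume t: "t \<in> {t0..cc + Tp}"
      show "x t \<in> Be"
      proof (cases "t \<le> cc")
        case True then show ?thesis using Suc.IH t by (auto simp: cc_def)
      next
        case False then show ?thesis using be2 t by auto
      qed
    qed
    ultimately show ?case unfolding e by blast
  qed
  have "\<forall>t1\<ge>t0. cl_solution f \<mu> Be x t0 t1"
  proof (intro allI impI)
    fix t1 assume t1: "t0 \<le> t1"
    obtain n where n: "(t1 - T1) / Tp \<le> real n" using real_arch_simple by blast
    then have tn: "t1 \<le> T1 + real n * Tp" using Tp by (simp add: divide_le_eq algebra_simps)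
    have "isol F x t0 t1" by (rule isol_sub[OF sols[of n, THEN conjunct2]]) (use t1 tn in auto)
    moreover have "\<forall>t\<in>{t0..t1}. x t \<in> Be" using sols[of n] tn by auto
    ultimately show "cl_solution f \<mu> Be x t0 t1" by (simp add: cl_iff)
  qed
  moreover have "x t0 = x0" using T1 \<psi>0 by (simp add: x_def)
  ultimately show ?thesis by blast
qed

end

context setting
begin

lemma stable: "cl_loc_exp_stable f \<mu> Be"
proof -
  obtain \<rho> L where H: "nearH \<rho> L" using nearH_ex by blast
  define \<theta> where "\<theta> = exp (L * Tp)"
  define \<kappa> where "\<kappa> = sqrt (\<alpha>2 / \<alpha>1)"
  define c' where "c' = max c (1/2)"
  define lam where "lam = - ln c' / (2 * Tp)"
  define \<delta> where "\<delta> = \<rho> / (2 * \<kappa> * \<theta> * \<theta>)"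
  define K where "K = \<kappa> * \<theta> * \<theta> * exp (2 * lam * Tp)"
  have \<theta>1: "1 \<le> \<theta>" using cst_facts(1)[OF H] unfolding \<theta>_def .
  have \<kappa>1: "1 \<le> \<kappa>" using cst_facts(2)[OF H] unfolding \<kappa>_def .
  have lam0: "0 < lam" using cst_facts(6)[OF H] unfolding lam_def c'_def .
  have \<rho>0: "0 < \<rho>" using H by (simp add: nearH_def)
  have \<delta>0: "0 < \<delta>" using \<rho>0 \<kappa>1 \<theta>1 by (simp add: \<delta>_def)
  have K0: "0 < K" using \<kappa>1 \<theta>1 by (simp add: K_def)
  have td: "\<delta> * \<theta> \<le> \<rho>"
  proof -
    have "\<delta> * \<theta> = \<rho> / (2 * \<kappa> * \<theta>)" using \<theta>1 by (simp add: \<delta>_def)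
    also have "\<dots> \<le> \<rho> / 1"
    proof (rule divide_left_mono)
      have "1 \<le> \<kappa> * \<theta>" using \<kappa>1 \<theta>1 by (metis mult_mono' order_trans mult_1_right zero_le_one)
      then show "1 \<le> 2 * \<kappa> * \<theta>" by simp
    qed (use \<rho>0 \<kappa>1 \<theta>1 in auto)
    finally show ?thesis by simp
  qed
  have "\<forall>t0\<ge>0.
        (\<forall>x0. norm x0 < \<delta> \<longrightarrow> (\<exists>x. x t0 = x0 \<and> (\<forall>t1\<ge>t0. cl_solution f \<mu> Be x t0 t1))) \<and>
        (\<forall>x t1. cl_solution f \<mu> Be x t0 t1 \<and> norm (x t0) < \<delta> \<longrightarrow>
            (\<forall>t\<in>{t0..t1}. norm (x t) \<le> K * norm (x t0) * exp (- lam * (t - t0))))"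
  proof (intro allI impI conjI ballI)
    fix t0 :: real assume t0: "0 \<le> t0"
    fix x0 :: 'a assume x0: "norm x0 < \<delta>"
    have "norm x0 * \<theta> \<le> \<delta> * \<theta>" using x0 \<theta>1 by (intro mult_right_mono) auto
    then have "norm x0 * \<theta> \<le> \<rho>" using td by linarith
    then have "norm x0 * exp (L * Tp) \<le> \<rho>" by (simp add: \<theta>_def)
    then show "\<exists>x. x t0 = x0 \<and> (\<forall>t1\<ge>t0. cl_solution f \<mu> Be x t0 t1)" by (rule existence[OF H t0])
  next
    fix t0 :: real and x t1 t assume t0: "0 \<le> t0"
      and xs: "cl_solution f \<mu> Be x t0 t1 \<and> norm (x t0) < \<delta>" and t: "t \<in> {t0..t1}"
    show "norm (x t) \<le> K * norm (x t0) * exp (- lam * (t - t0))"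
      using estimate[OF H t0 conjunct1[OF xs] _ t] conjunct2[OF xs]
      unfolding K_def lam_def c'_def \<kappa>_def \<theta>_def \<delta>_def by blast
  qed
  with \<delta>0 K0 lam0 show ?thesis unfolding cl_loc_exp_stable_def by blast
qed

end

theorem proposition1:
  fixes f :: "real \<Rightarrow> 'a::euclidean_space \<Rightarrow> 'b::euclidean_space \<Rightarrow> 'a"
    and Tp :: real and B Be :: "'a set" and V :: "'a \<Rightarrow> real"
    and \<alpha>1 \<alpha>2 c :: real
    and u :: "'a \<Rightarrow> real \<Rightarrow> 'b" and \<phi> :: "'a \<Rightarrow> real \<Rightarrow> 'a"
    and \<mu> :: "real \<Rightarrow> 'a \<Rightarrow> 'b"
  assumes Tp: "Tp > 0"
    (* A1 *)
    and f_lip: "loc_lipschitz_in_x UNIV (\<lambda>t z. f t (fst z) (snd z))"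
    and f_pw: "\<And>x w. pw_continuous_nonneg (\<lambda>t. f t x w)"
    and f_per: "\<And>t x w. t \<ge> 0 \<Longrightarrow> f (t + Tp) x w = f t x w"
    (* A2 *)
    and f_eq: "\<And>t. t \<ge> 0 \<Longrightarrow> f t 0 0 = 0"
    (* A3 *)
    and B_ball: "\<exists>r>0. B = ball 0 r"
    and V0: "V 0 = 0" and Vpos: "\<And>x. x \<in> B \<Longrightarrow> x \<noteq> 0 \<Longrightarrow> V x > 0"
    and V_lip: "loc_lipschitz_on B V"
    and \<alpha>: "0 < \<alpha>1" "\<alpha>1 \<le> \<alpha>2"
    and V_bounds: "\<And>x. x \<in> B \<Longrightarrow> \<alpha>1 * (x \<bullet> x) \<le> V x \<and> V x \<le> \<alpha>2 * (x \<bullet> x)"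
    (* A4 *)
    and c: "0 \<le> c" "c < 1"
    and u_cont: "\<And>\<xi>. \<xi> \<in> B \<Longrightarrow> continuous_on {0..Tp} (u \<xi>)"
    and \<phi>_sol: "\<And>\<xi> t. \<xi> \<in> B \<Longrightarrow> t \<in> {0..Tp} \<Longrightarrow>
        ((\<lambda>\<tau>. f \<tau> (\<phi> \<xi> \<tau>) (u \<xi> \<tau>)) has_integral (\<phi> \<xi> t - \<xi>)) {0..t}"
    and \<phi>_end: "\<And>\<xi>. \<xi> \<in> B \<Longrightarrow> \<phi> \<xi> Tp \<in> B \<and> V (\<phi> \<xi> Tp) \<le> c * V \<xi>"
    and u0: "\<And>t. t \<in> {0..Tp} \<Longrightarrow> u 0 t = 0"
    (* feedback \<mu> *)
    and Be: "open Be" "B \<subseteq> Be"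
    and \<mu>_pw: "\<And>x. x \<in> Be \<Longrightarrow> pw_continuous_nonneg (\<lambda>t. \<mu> t x)"
    and \<mu>_per: "\<And>t x. t \<ge> 0 \<Longrightarrow> x \<in> Be \<Longrightarrow> \<mu> (t + Tp) x = \<mu> t x"
    and \<mu>_lip: "loc_lipschitz_in_x Be \<mu>"
    and \<mu>_\<phi>: "\<And>\<xi> t. \<xi> \<in> B \<Longrightarrow> t \<in> {0..<Tp} \<Longrightarrow> \<phi> \<xi> t \<in> Be \<and> \<mu> t (\<phi> \<xi> t) = u \<xi> t"
  shows "cl_loc_exp_stable f \<mu> Be \<and> (\<forall>\<xi>\<in>B. cl_solution f \<mu> Be (\<phi> \<xi>) 0 Tp)"
proof -
  interpret setting f Tp B Be V \<alpha>1 \<alpha>2 c u \<phi> \<mu>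
    by (rule setting.intro) (fact assms)+
  show ?thesis using stable cl_phi by blast
qed

end
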